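(* Fix data $(x_i,y_i,z_i)_{i=1}^n$, $\lambda,\nu>0$, $m\in\mathbb N$ and feature maps $\phi_{x,m},\phi_{z,m}$; let $\Phi_f,\Phi_g,\mathcal L_{rf},\mathcal L_i$ be as in the context, with $\theta_0\sim\mathcal N(0,I)$, $\varphi_0\sim\mathcal N(0,\lambda\nu^{-1}I)$, $\tilde Y\sim\mathcal N(Y,\lambda I)$, and let $(\theta^*,\varphi^* )$ be the unique saddle point of $\mathcal L_{rf}$. Run projected SGDA: starting from $(\theta_0,\varphi_0)$, for $\ell\ge0$ draw $I_\ell$ uniformly from $[n]$ independently and set $\theta_{\ell+1}=\mathrm{Proj}_{B_f}(\theta_\ell-\eta_\ell\nabla_\theta\mathcal L_{I_\ell}(\theta_\ell,\varphi_\ell))$, $\varphi_{\ell+1}=\mathrm{Proj}_{B_g}(\varphi_\ell+\eta_\ell\nabla_\varphi\mathcal L_{I_\ell}(\theta_\ell,\varphi_\ell))$, with $\eta_\ell=\frac1{\mu(\ell+1)}$, $\mu=\min\{\lambda,\nu\}$, where $\mathrm{Proj}_B$ is Euclidean projection onto the ball of radius $B$. Then for any $\epsilon,\delta,B_1,B_2,B_3>0$ there exist $B_f,B_g>0$ and $L_0=O(\delta^{-1}\epsilon^{-2})$ such that for all $L\ge L_0$, $$\mathbb P\big(\{\|\theta_L-\theta^*\|_2>\epsilon\}\cap E_n\big)\le\delta,\qquad E_n:=\Big\{\|\theta_0\|_2+\|\varphi_0\|_2\le B_1,\ \|\tilde Y\|_2\le B_2,\ \sup_z\tilde k_{z,m}(z,z)+\sup_x\tilde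 k_{x,m}(x,x)\le B_3\Big\},$$ where the probability is over $\theta_0,\varphi_0,\tilde Y$ and the gradient noise.
   Context: $\Phi_f\in\mathbb R^{n\times m}$ has rows $m^{-1/2}\phi_{x,m}(x_i)^\top$, $\Phi_g\in\mathbb R^{n\times m}$ has rows $m^{-1/2}\phi_{z,m}(z_i)^\top$; $\tilde k_{x,m}(x,x')=\frac1m\phi_{x,m}(x)^\top\phi_{x,m}(x')$ and similarly $\tilde k_{z,m}$. $\mathcal L_{rf}(\theta,\varphi)=\theta^\top\Phi_f^\top\Phi_g\varphi-\tilde Y^\top\Phi_g\varphi-\frac12\varphi^\top\Phi_g^\top\Phi_g\varphi-\frac\nu2\|\varphi-\varphi_0\|_2^2+\frac\lambda2\|\theta-\theta_0\|_2^2$ (strongly convex in $\theta$, strongly concave in $\varphi$), and with $E_i=e_ie_i^\top$, $\mathcal L_i(\theta,\varphi)=n(\theta^\top\Phi_f^\top E_i\Phi_g\varphi-\tilde Y^\top E_i\Phi_g\varphi-\frac12\varphi^\top\Phi_g^\top E_i\Phi_g\varphi)-\frac\nu2\|\varphi-\varphi_0\|_2^2+\frac\lambda2\|\theta-\theta_0\|_2^2$, so that $\mathcal L_{rf}=\frac1n\sum_i\mathcal L_i$. *)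

theory Defs
  imports "HOL-Analysis.Analysis" "HOL-Probability.Probability"
begin

definition feat_mat :: "('a \<Rightarrow> real^'m::finite) \<Rightarrow> ('n::finite \<Rightarrow> 'a) \<Rightarrow> real^'m^'n" where
  "feat_mat phi xs = (\<chi> i j. (phi (xs i)) $ j / sqrt (real CARD('m)))"

definition rf_kernel :: "('a \<Rightarrow> real^'m::finite) \<Rightarrow> 'a \<Rightarrow> 'a \<Rightarrow> real" where
  "rf_kernel phi x x' = (phi x \<bullet> phi x') / real CARD('m)"

definition L_rf :: "real^'m::finite^'n::finite \<Rightarrow> real^'m^'n \<Rightarrow> real^'n \<Rightarrow> real^'m \<Rightarrow> real^'m
    \<Rightarrow> real \<Rightarrow> real \<Rightarrow> real^'m \<Rightarrow> real^'m \<Rightarrow> real" where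
  "L_rf Pf Pg Yt th0 ph0 lam nu th ph =
     (Pf *v th) \<bullet> (Pg *v ph) - Yt \<bullet> (Pg *v ph) - 1/2 * ((Pg *v ph) \<bullet> (Pg *v ph))
     - nu/2 * (norm (ph - ph0))^2 + lam/2 * (norm (th - th0))^2"

definition E_mat :: "'n::finite \<Rightarrow> real^'n^'n" where
  "E_mat i = (\<chi> a b. if a = i \<and> b = i then 1 else 0)"

definition L_i :: "real^'m::finite^'n::finite \<Rightarrow> real^'m^'n \<Rightarrow> real^'n \<Rightarrow> real^'m \<Rightarrow> real^'m
    \<Rightarrow> real \<Rightarrow> real \<Rightarrow> 'n \<Rightarrow> real^'m \<Rightarrow> real^'m \<Rightarrow> real" where
  "L_i Pf Pg Yt th0 ph0 lam nu i th ph =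
     real CARD('n) * ((Pf *v th) \<bullet> (E_mat i *v (Pg *v ph)) - Yt \<bullet> (E_mat i *v (Pg *v ph))
        - 1/2 * ((Pg *v ph) \<bullet> (E_mat i *v (Pg *v ph))))
     - nu/2 * (norm (ph - ph0))^2 + lam/2 * (norm (th - th0))^2"

definition grad :: "('a::real_inner \<Rightarrow> real) \<Rightarrow> 'a \<Rightarrow> 'a" where
  "grad f x = (THE g. (f has_derivative (\<lambda>h. g \<bullet> h)) (at x))"

definition saddle_point :: "('a \<Rightarrow> 'b \<Rightarrow> real) \<Rightarrow> 'a \<Rightarrow> 'b \<Rightarrow> bool" where
  "saddle_point f ths phs \<longleftrightarrow> (\<forall>th ph. f ths ph \<le> f ths phs \<and> f ths phs \<le> f th phs)"

definition proj_ball :: "real \<Rightarrow> 'a::euclidean_space \<Rightarrow> 'a" where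
  "proj_ball B v = closest_point (cball 0 B) v"

primrec sgda :: "real^'m::finite^'n::finite \<Rightarrow> real^'m^'n \<Rightarrow> real^'n \<Rightarrow> real^'m \<Rightarrow> real^'m
    \<Rightarrow> real \<Rightarrow> real \<Rightarrow> real \<Rightarrow> real \<Rightarrow> (nat \<Rightarrow> 'n) \<Rightarrow> nat \<Rightarrow> (real^'m) \<times> (real^'m)" where
  "sgda Pf Pg Yt th0 ph0 lam nu Bf Bg I 0 = (th0, ph0)"
| "sgda Pf Pg Yt th0 ph0 lam nu Bf Bg I (Suc l) =
     (let (th, ph) = sgda Pf Pg Yt th0 ph0 lam nu Bf Bg I l;
          eta = 1 / (min lam nu * real (Suc l));
          Lc = L_i Pf Pg Yt th0 ph0 lam nu (I l)
      in (proj_ball Bf (th - eta *\<^sub>R grad (\<lambda>t. Lc t ph) th),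
          proj_ball Bg (ph + eta *\<^sub>R grad (\<lambda>p. Lc th p) ph)))"

definition gauss_vec :: "real^'d::finite \<Rightarrow> real \<Rightarrow> (real^'d) measure" where
  "gauss_vec mu s2 = density lborel (\<lambda>v. ennreal (\<Prod>i\<in>UNIV. normal_density (mu $ i) (sqrt s2) (v $ i)))"

definition index_seq :: "(nat \<Rightarrow> 'n::finite) measure" where
  "index_seq = PiM UNIV (\<lambda>_. measure_pmf (pmf_of_set (UNIV :: 'n set)))"

text \<open>Joint probability space of ((theta0, phi0), (Ytilde, I)).\<close>
definition sgda_space :: "real \<Rightarrow> real \<Rightarrow> real^'n::finite
    \<Rightarrow> (((real^'m::finite) \<times> (real^'m)) \<times> ((real^'n) \<times> (nat \<Rightarrow> 'n))) measure" where
  "sgda_space lam nu Y =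
     (gauss_vec 0 1 \<Otimes>\<^sub>M gauss_vec 0 (lam / nu)) \<Otimes>\<^sub>M (gauss_vec Y lam \<Otimes>\<^sub>M index_seq)"

end

theory Submission
  imports Defs
begin

lemma prod_vec_Basis:
  fixes h :: "'n::finite \<Rightarrow> real"
  shows "(\<Prod>i\<in>UNIV. h i) = (\<Prod>b\<in>(Basis::(real^'n) set). h (SOME i. b = axis i 1))"
proof -
  have inj: "inj (\<lambda>i::'n. axis i (1::real))" by (auto intro!: injI simp: axis_eq_axis)
  have "(\<Prod>b\<in>(Basis::(real^'n) set). h (SOME i. b = axis i 1)) = (\<Prod>b\<in>(\<lambda>i. axis i (1::real)) ` UNIV. h (SOME i. b = axis i 1))"
  proof -
    have B: "(Basis::(real^'n) set) = range (\<lambda>i. axis i (1::real))" by (auto simp: Basis_vec_def)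
    show ?thesis by (simp only: B)
  qed
  also have "\<dots> = (\<Prod>i\<in>UNIV. h (SOME j. axis i (1::real) = axis j 1))"
    using inj by (subst prod.reindex) auto
  also have "\<dots> = (\<Prod>i\<in>UNIV. h i)"
    by (intro prod.cong refl) (metis (mono_tags, lifting) axis_eq_axis someI_ex zero_neq_one)
  finally show ?thesis by simp
qed

lemma gauss_prob:
  fixes mu :: "real^'d::finite"
  assumes "s2 > 0" shows "prob_space (gauss_vec mu s2)"
proof
  have sp: "0 < sqrt s2" using assms by simp
  have "(\<integral>\<^sup>+v. ennreal (\<Prod>i\<in>UNIV. normal_density (mu $ i) (sqrt s2) (v $ i)) \<partial>lborel)
     = (\<integral>\<^sup>+v. (\<Prod>b\<in>(Basis::(real^'d) set). (\<lambda>b t. ennreal (normal_density (mu \<bullet> b) (sqrt s2) t)) b (v \<bullet> b)) \<partial>lborel)"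
  proof (intro nn_integral_cong)
    fix v :: "real^'d"
    have "(\<Prod>i\<in>UNIV. normal_density (mu $ i) (sqrt s2) (v $ i))
       = (\<Prod>b\<in>(Basis::(real^'d) set). (\<lambda>i. normal_density (mu $ i) (sqrt s2) (v $ i)) (SOME i. b = axis i 1))"
      by (rule prod_vec_Basis)
    also have "\<dots> = (\<Prod>b\<in>(Basis::(real^'d) set). normal_density (mu \<bullet> b) (sqrt s2) (v \<bullet> b))"
    proof (intro prod.cong refl)
      fix b :: "real^'d" assume "b \<in> Basis"
      then obtain i where b: "b = axis i 1" by (auto simp: Basis_vec_def)
      have "(SOME j. b = axis j 1) = i" unfolding b
        by (rule some_equality) (auto simp: axis_eq_axis)
      then show "normal_density (mu $ (SOME i. b = axis i 1)) (sqrt s2) (v $ (SOME i. b = axis i 1)) =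
         normal_density (mu \<bullet> b) (sqrt s2) (v \<bullet> b)"
        by (simp add: b inner_axis)
    qed
    finally show "ennreal (\<Prod>i\<in>UNIV. normal_density (mu $ i) (sqrt s2) (v $ i)) = 
      (\<Prod>b\<in>Basis. ennreal (normal_density (mu \<bullet> b) (sqrt s2) (v \<bullet> b)))"
      by (simp add: prod_ennreal)
  qed
  also have "\<dots> = (\<Prod>b\<in>(Basis::(real^'d) set). (\<integral>\<^sup>+t. ennreal (normal_density (mu \<bullet> b) (sqrt s2) t) \<partial>lborel))"
    by (rule nn_integral_lborel_prod) auto
  also have "\<dots> = 1"
    using prob_space.emeasure_space_1[OF prob_space_normal_density[OF sp]]
    by (simp add: emeasure_density)
  finally show "emeasure (gauss_vec mu s2) (space (gauss_vec mu s2)) = 1"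
    unfolding gauss_vec_def by (simp add: emeasure_density)
qed

lemma E_mat_mult: "E_mat i *v w = (\<chi> a. if a = i then w $ i else 0)"
proof -
  have "\<And>a. (\<Sum>j\<in>UNIV. (if a = i \<and> j = i then 1 else 0) * w $ j) = (if a = i then w $ i else 0)"
  proof -
    fix a show "(\<Sum>j\<in>UNIV. (if a = i \<and> j = i then 1 else 0) * w $ j) = (if a = i then w $ i else 0)"
    proof (cases "a = i")
      case True
      have "(\<Sum>j\<in>UNIV. (if a = i \<and> j = i then 1 else 0) * w $ j) = (\<Sum>j\<in>UNIV. if j = i then w $ j else 0)"
        by (rule sum.cong) (auto simp: True)
      then show ?thesis by (simp add: True)
    qed simp
  qed
  then show ?thesis by (simp add: vec_eq_iff matrix_vector_mult_def E_mat_def)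
qed

lemma inner_E: "(x::real^'n::finite) \<bullet> (E_mat i *v w) = x $ i * w $ i"
  by (simp add: E_mat_mult inner_vec_def if_distrib cong: if_cong)

lemma L_i_alt:
  "L_i P Q Yt th0 ph0 lam nu i th ph =
     real CARD('n) * ((P$i \<bullet> th) * (Q$i \<bullet> ph) - Yt$i * (Q$i \<bullet> ph) - 1/2 * (Q$i \<bullet> ph)^2)
     - nu/2 * (norm (ph - ph0))^2 + lam/2 * (norm (th - th0))^2"
  for P Q :: "real^'m::finite^'n::finite"
  by (simp add: L_i_def inner_E matrix_vector_mul_component power2_eq_square)

lemma grad_eqI:
  fixes f :: "'a::real_inner \<Rightarrow> real"
  assumes "(f has_derivative (\<lambda>h. g \<bullet> h)) (at x)"
  shows "grad f x = g"
  unfolding grad_def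
proof (rule the_equality)
  show "(f has_derivative (\<lambda>h. g \<bullet> h)) (at x)" by (rule assms)
  fix g' assume "(f has_derivative (\<lambda>h. g' \<bullet> h)) (at x)"
  from has_derivative_unique[OF assms this] have "\<And>h. g \<bullet> h = g' \<bullet> h" by metis
  from this[of "g' - g"] this[of "g - g'"] show "g' = g"
    by (metis inner_diff_left inner_eq_zero_iff right_minus_eq)
qed

lemma grad_th:
  fixes P Q :: "real^'m::finite^'n::finite"
  shows "grad (\<lambda>t. L_i P Q Yt th0 ph0 lam nu i t ph) th =
     (real CARD('n) * (Q$i \<bullet> ph)) *\<^sub>R (P$i) + lam *\<^sub>R (th - th0)"
proof (rule grad_eqI)
  show "((\<lambda>t. L_i P Q Yt th0 ph0 lam nu i t ph) has_derivative
     (\<lambda>h. ((real CARD('n) * (Q$i \<bullet> ph)) *\<^sub>R (P$i) + lam *\<^sub>R (th - th0)) \<bullet> h)) (at th)"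
    unfolding L_i_alt power2_norm_eq_inner
    apply (rule has_derivative_eq_rhs)
     apply (rule derivative_eq_intros refl)+
    apply (rule ext)
    apply (simp add: algebra_simps inner_commute)
    done
qed

definition Fth :: "real^'m::finite^'n::finite \<Rightarrow> real^'m^'n \<Rightarrow> real^'m \<Rightarrow> real \<Rightarrow> real^'m \<Rightarrow> real^'m \<Rightarrow> real^'m" where
  "Fth P Q th0 lam th ph = (\<Sum>i\<in>UNIV. (Q$i \<bullet> ph) *\<^sub>R P$i) + lam *\<^sub>R (th - th0)"

definition Fph :: "real^'m::finite^'n::finite \<Rightarrow> real^'m^'n \<Rightarrow> real^'n \<Rightarrow> real^'m \<Rightarrow> real \<Rightarrow> real^'m \<Rightarrow> real^'m \<Rightarrow> real^'m" where
  "Fph P Q Yt ph0 nu th ph = (\<Sum>i\<in>UNIV. ((P$i \<bullet> th) - Yt$i - (Q$i \<bullet> ph)) *\<^sub>R Q$i) - nu *\<^sub>R (ph - ph0)"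

lemma sum_diff_cong: "(\<And>i. f i - g i = h i) \<Longrightarrow> sum f A - sum g A = (sum h A :: 'a::ab_group_add)"
  by (simp add: sum_subtractf[symmetric])

lemma mono_aux:
  fixes P Q :: "real^'m::finite^'n::finite"
  shows "((\<Sum>i\<in>UNIV. (Q$i \<bullet> e) *\<^sub>R P$i) + lam *\<^sub>R d) \<bullet> d
     - ((\<Sum>i\<in>UNIV. ((P$i \<bullet> d) - (Q$i \<bullet> e)) *\<^sub>R Q$i) - nu *\<^sub>R e) \<bullet> e
     = lam * (norm d)^2 + (\<Sum>i\<in>UNIV. (Q$i \<bullet> e)^2) + nu * (norm e)^2"
  unfolding power2_norm_eq_inner
  by (simp add: inner_sum_left inner_sum_right inner_add_left inner_diff_left power2_norm_eq_inner power2_eq_square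
         sum_subtractf algebra_simps inner_commute)

lemma mono_id:
  fixes P Q :: "real^'m::finite^'n::finite"
  shows "(Fth P Q th0 lam th ph - Fth P Q th0 lam th' ph') \<bullet> (th - th')
       - (Fph P Q Yt ph0 nu th ph - Fph P Q Yt ph0 nu th' ph') \<bullet> (ph - ph')
     = lam * (norm (th - th'))^2 + (\<Sum>i\<in>UNIV. (Q$i \<bullet> (ph - ph'))^2) + nu * (norm (ph - ph'))^2"
proof -
  have A0: "(\<Sum>i\<in>UNIV. (Q$i \<bullet> ph) *\<^sub>R P$i) - (\<Sum>i\<in>UNIV. (Q$i \<bullet> ph') *\<^sub>R P$i) = (\<Sum>i\<in>UNIV. (Q$i \<bullet> (ph - ph')) *\<^sub>R P$i)"
    by (rule sum_diff_cong) (simp add: inner_diff_right scaleR_diff_left)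
  have A: "Fth P Q th0 lam th ph - Fth P Q th0 lam th' ph' = (\<Sum>i\<in>UNIV. (Q$i \<bullet> (ph - ph')) *\<^sub>R P$i) + lam *\<^sub>R (th - th')"
    unfolding Fth_def A0[symmetric] by (simp add: algebra_simps)
  have B0: "(\<Sum>i\<in>UNIV. ((P$i \<bullet> th) - Yt$i - (Q$i \<bullet> ph)) *\<^sub>R Q$i) - (\<Sum>i\<in>UNIV. ((P$i \<bullet> th') - Yt$i - (Q$i \<bullet> ph')) *\<^sub>R Q$i) 
     = (\<Sum>i\<in>UNIV. ((P$i \<bullet> (th - th')) - (Q$i \<bullet> (ph - ph'))) *\<^sub>R Q$i)"
    by (rule sum_diff_cong) (simp add: inner_diff_right scaleR_diff_left algebra_simps)
  have B: "Fph P Q Yt ph0 nu th ph - Fph P Q Yt ph0 nu th' ph' = (\<Sum>i\<in>UNIV. ((P$i \<bullet> (th - th')) - (Q$i \<bullet> (ph - ph'))) *\<^sub>R Q$i) - nu *\<^sub>R (ph - ph')"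
    unfolding Fph_def B0[symmetric] by (simp add: algebra_simps)
  show ?thesis
    unfolding A B by (rule mono_aux)
qed

lemma L_rf_alt:
  fixes P Q :: "real^'m::finite^'n::finite"
  shows "L_rf P Q Yt th0 ph0 lam nu th ph =
     (\<Sum>i\<in>UNIV. (P$i \<bullet> th) * (Q$i \<bullet> ph)) - (\<Sum>i\<in>UNIV. Yt$i * (Q$i \<bullet> ph)) - 1/2 * (\<Sum>i\<in>UNIV. (Q$i \<bullet> ph)^2)
     - nu/2 * (norm (ph - ph0))^2 + lam/2 * (norm (th - th0))^2"
  by (simp add: L_rf_def inner_vec_def matrix_vector_mul_component power2_eq_square)

lemma exp_th:
  fixes P Q :: "real^'m::finite^'n::finite"
  shows "L_rf P Q Yt th0 ph0 lam nu (th + u) ph - L_rf P Q Yt th0 ph0 lam nu th ph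
    = Fth P Q th0 lam th ph \<bullet> u + lam/2 * (norm u)^2"
  unfolding L_rf_alt Fth_def power2_norm_eq_inner
  by (simp add: inner_sum_left inner_sum_right inner_add_left inner_add_right inner_diff_left inner_diff_right power2_norm_eq_inner
         sum.distrib algebra_simps inner_commute)

lemma exp_ph:
  fixes P Q :: "real^'m::finite^'n::finite"
  shows "L_rf P Q Yt th0 ph0 lam nu th (ph + v) - L_rf P Q Yt th0 ph0 lam nu th ph
    = Fph P Q Yt ph0 nu th ph \<bullet> v - 1/2 * (\<Sum>i\<in>UNIV. (Q$i \<bullet> v)^2) - nu/2 * (norm v)^2"
  unfolding L_rf_alt Fph_def power2_norm_eq_inner
  by (simp add: inner_sum_left inner_sum_right inner_add_left inner_add_right inner_diff_left inner_diff_right power2_norm_eq_inner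
         power2_eq_square sum.distrib sum_subtractf algebra_simps inner_commute sum_distrib_left)


lemma sumsq_le:
  fixes Q :: "real^'m::finite^'n::finite"
  shows "(\<Sum>i\<in>UNIV. (Q$i \<bullet> v)^2) \<le> (\<Sum>i\<in>UNIV. (norm (Q$i))^2) * (norm v)^2"
  unfolding sum_distrib_right
proof (rule sum_mono)
  fix i show "(Q$i \<bullet> v)^2 \<le> (norm (Q$i))^2 * (norm v)^2"
    by (metis Cauchy_Schwarz_ineq power2_norm_eq_inner)
qed

lemma saddle_iff:
  fixes P Q :: "real^'m::finite^'n::finite"
  assumes lam: "lam > 0" and nu: "nu > 0"
  shows "saddle_point (L_rf P Q Yt th0 ph0 lam nu) a b \<longleftrightarrow>
     Fth P Q th0 lam a b = 0 \<and> Fph P Q Yt ph0 nu a b = 0"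
proof
  let ?L = "L_rf P Q Yt th0 ph0 lam nu"
  assume S: "saddle_point ?L a b"
  let ?F = "Fth P Q th0 lam a b"
  have "?L a b \<le> ?L (a + (- (1/lam) *\<^sub>R ?F)) b" using S unfolding saddle_point_def by blast
  then have "0 \<le> ?F \<bullet> (- (1/lam) *\<^sub>R ?F) + lam/2 * (norm (- (1/lam) *\<^sub>R ?F))^2"
    using exp_th[of P Q Yt th0 ph0 lam nu a "- (1/lam) *\<^sub>R ?F" b] by simp
  also have "\<dots> = (- ((norm ?F)^2)) / (2*lam)"
    using lam by (simp add: power2_norm_eq_inner[symmetric] power_mult_distrib field_simps power2_eq_square)
  finally have "(norm ?F)^2 / (2*lam) \<le> 0" by simp
  then have "(norm ?F)^2 \<le> 0" using lam by (simp add: divide_le_0_iff)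
  then have F1: "?F = 0" by simp
  let ?G = "Fph P Q Yt ph0 nu a b"
  define q where "q = (\<Sum>i\<in>UNIV. (norm (Q$i))^2)"
  have q0: "q \<ge> 0" unfolding q_def by (simp add: sum_nonneg)
  define t where "t = 1 / (q + nu)"
  have t0: "t > 0" using q0 nu by (simp add: t_def)
  have "?L a (b + t *\<^sub>R ?G) \<le> ?L a b" using S unfolding saddle_point_def by blast
  then have "?G \<bullet> (t *\<^sub>R ?G) - 1/2 * (\<Sum>i\<in>UNIV. (Q$i \<bullet> (t *\<^sub>R ?G))^2) - nu/2 * (norm (t *\<^sub>R ?G))^2 \<le> 0"
    using exp_ph[of P Q Yt th0 ph0 lam nu a b "t *\<^sub>R ?G"] by simp
  moreover have "(\<Sum>i\<in>UNIV. (Q$i \<bullet> (t *\<^sub>R ?G))^2) \<le> q * (norm (t *\<^sub>R ?G))^2"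
    unfolding q_def by (rule sumsq_le)
  ultimately have "?G \<bullet> (t *\<^sub>R ?G) - 1/2 * (q + nu) * (norm (t *\<^sub>R ?G))^2 \<le> 0"
    by (simp add: algebra_simps)
  also have "?G \<bullet> (t *\<^sub>R ?G) - 1/2 * (q + nu) * (norm (t *\<^sub>R ?G))^2 = t / 2 * (norm ?G)^2"
  proof -
    have st: "(q + nu) * t = 1" using q0 nu by (simp add: t_def)
    have e1: "?G \<bullet> (t *\<^sub>R ?G) = t * (norm ?G)^2" by (simp add: power2_norm_eq_inner)
    have e2: "(norm (t *\<^sub>R ?G))^2 = t^2 * (norm ?G)^2" by (simp add: power_mult_distrib)
    have "t * (norm ?G)^2 - 1/2 * (q + nu) * (t^2 * (norm ?G)^2) = t * (norm ?G)^2 - 1/2 * ((q + nu) * t) * t * (norm ?G)^2"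
      by (simp add: power2_eq_square algebra_simps)
    also have "\<dots> = t / 2 * (norm ?G)^2" unfolding st by simp
    finally show ?thesis unfolding e1 e2 .
  qed
  finally have "(norm ?G)^2 \<le> 0" using t0 by (simp add: mult_le_0_iff)
  then have "?G = 0" by simp
  with F1 show "?F = 0 \<and> ?G = 0" by simp
next
  let ?L = "L_rf P Q Yt th0 ph0 lam nu"
  assume F: "Fth P Q th0 lam a b = 0 \<and> Fph P Q Yt ph0 nu a b = 0"
  show "saddle_point ?L a b" unfolding saddle_point_def
  proof (intro allI conjI)
    fix th ph
    have "?L a (b + (ph - b)) - ?L a b \<le> 0"
    proof -
      have "0 \<le> (\<Sum>i\<in>UNIV. (Q $ i \<bullet> (ph - b))\<^sup>2)" by (simp add: sum_nonneg)
      moreover have "0 \<le> nu * (norm (ph - b))\<^sup>2" using nu by simp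
      ultimately show ?thesis unfolding exp_ph using F by simp
    qed
    then show "?L a ph \<le> ?L a b" by simp
    have "?L (a + (th - a)) b - ?L a b \<ge> 0"
      unfolding exp_th using F lam by simp
    then show "?L a b \<le> ?L th b" by simp
  qed
qed

definition Tlin :: "real^'m::finite^'n::finite \<Rightarrow> real^'m^'n \<Rightarrow> real \<Rightarrow> real \<Rightarrow> ((real^'m) \<times> (real^'m)) \<Rightarrow> ((real^'m) \<times> (real^'m))" where
  "Tlin P Q lam nu z = (Fth P Q 0 lam (fst z) (snd z), Fph P Q 0 0 nu (fst z) (snd z))"

lemma Fth_shift: "Fth P Q th0 lam u v = Fth P Q 0 lam u v - lam *\<^sub>R th0"
  by (simp add: Fth_def algebra_simps)

lemma Fph_shift: "Fph P Q Yt ph0 nu u v = Fph P Q 0 0 nu u v - ((\<Sum>i\<in>UNIV. Yt$i *\<^sub>R Q$i) - nu *\<^sub>R ph0)"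
proof -
  have "(\<Sum>i\<in>UNIV. ((P$i \<bullet> u) - Yt$i - (Q$i \<bullet> v)) *\<^sub>R Q$i) - (\<Sum>i\<in>UNIV. ((P$i \<bullet> u) - 0$i - (Q$i \<bullet> v)) *\<^sub>R Q$i)
    = (\<Sum>i\<in>UNIV. (- Yt$i) *\<^sub>R Q$i)"
    by (rule sum_diff_cong) (simp add: algebra_simps)
  then show ?thesis unfolding Fph_def by (simp add: algebra_simps sum_negf scaleR_left.sum)
qed

lemma Tlin_linear:
  fixes P Q :: "real^'m::finite^'n::finite"
  shows "linear (Tlin P Q lam nu)"
proof (rule linearI)
  fix x y :: "(real^'m) \<times> (real^'m)" and c :: real
  show "Tlin P Q lam nu (x + y) = Tlin P Q lam nu x + Tlin P Q lam nu y"
  proof -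
    have "(\<Sum>i\<in>UNIV. ((P$i \<bullet> fst (x+y)) - 0$i - (Q$i \<bullet> snd (x+y))) *\<^sub>R Q$i)
      = (\<Sum>i\<in>UNIV. ((P$i \<bullet> fst x) - 0$i - (Q$i \<bullet> snd x)) *\<^sub>R Q$i + ((P$i \<bullet> fst y) - 0$i - (Q$i \<bullet> snd y)) *\<^sub>R Q$i)"
      by (rule sum.cong) (simp_all add: inner_add_right algebra_simps)
    moreover have "(\<Sum>i\<in>UNIV. (Q$i \<bullet> snd (x+y)) *\<^sub>R P$i) = (\<Sum>i\<in>UNIV. (Q$i \<bullet> snd x) *\<^sub>R P$i + (Q$i \<bullet> snd y) *\<^sub>R P$i)"
      by (rule sum.cong) (simp_all add: inner_add_right algebra_simps)
    ultimately show ?thesis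
      unfolding Tlin_def Fth_def Fph_def sum.distrib by (simp add: algebra_simps)
  qed
  show "Tlin P Q lam nu (c *\<^sub>R x) = c *\<^sub>R Tlin P Q lam nu x"
    by (simp add: Tlin_def Fth_def Fph_def scaleR_sum_right algebra_simps)
qed

lemma Tlin_inj:
  fixes P Q :: "real^'m::finite^'n::finite"
  assumes lam: "lam > 0" and nu: "nu > 0"
  shows "inj (Tlin P Q lam nu)"
proof (rule injI)
  fix x y :: "(real^'m) \<times> (real^'m)" assume "Tlin P Q lam nu x = Tlin P Q lam nu y"
  then have e1: "Fth P Q 0 lam (fst x) (snd x) = Fth P Q 0 lam (fst y) (snd y)"
     and e2: "Fph P Q 0 0 nu (fst x) (snd x) = Fph P Q 0 0 nu (fst y) (snd y)"
    by (auto simp: Tlin_def)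
  have "lam * (norm (fst x - fst y))^2 + (\<Sum>i\<in>UNIV. (Q$i \<bullet> (snd x - snd y))^2) + nu * (norm (snd x - snd y))^2 = 0"
    using mono_id[of P Q 0 lam "fst x" "snd x" "fst y" "snd y" 0 0 nu] e1 e2 by simp
  moreover have "0 \<le> (\<Sum>i\<in>UNIV. (Q$i \<bullet> (snd x - snd y))^2)" by (simp add: sum_nonneg)
  moreover have "0 \<le> lam * (norm (fst x - fst y))^2" "0 \<le> nu * (norm (snd x - snd y))^2" using lam nu by auto
  ultimately have "lam * (norm (fst x - fst y))^2 = 0" "nu * (norm (snd x - snd y))^2 = 0" by linarith+
  then show "x = y" using lam nu by (simp add: prod_eq_iff)
qed

definition Tinv :: "real^'m::finite^'n::finite \<Rightarrow> real^'m^'n \<Rightarrow> real \<Rightarrow> real \<Rightarrow> ((real^'m) \<times> (real^'m)) \<Rightarrow> ((real^'m) \<times> (real^'m))" where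
  "Tinv P Q lam nu = (SOME g. linear g \<and> g \<circ> Tlin P Q lam nu = id)"

lemma Tinv_props:
  fixes P Q :: "real^'m::finite^'n::finite"
  assumes lam: "lam > 0" and nu: "nu > 0"
  shows "linear (Tinv P Q lam nu)" "Tlin P Q lam nu (Tinv P Q lam nu b) = b"
proof -
  have "\<exists>g. linear g \<and> g \<circ> Tlin P Q lam nu = id"
    by (rule linear_injective_left_inverse[OF Tlin_linear Tlin_inj[OF lam nu]])
  then have g: "linear (Tinv P Q lam nu) \<and> Tinv P Q lam nu \<circ> Tlin P Q lam nu = id"
    unfolding Tinv_def by (rule someI_ex)
  then show "linear (Tinv P Q lam nu)" by simp
  have "surj (Tlin P Q lam nu)"
    by (simp add: linear_injective_imp_surjective Tlin_linear Tlin_inj lam nu)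
  then obtain w where w: "b = Tlin P Q lam nu w" by blast
  have "Tinv P Q lam nu (Tlin P Q lam nu w) = w" using g by (metis comp_apply id_apply)
  then show "Tlin P Q lam nu (Tinv P Q lam nu b) = b" using w by simp
qed

definition zstar :: "real^'m::finite^'n::finite \<Rightarrow> real^'m^'n \<Rightarrow> real^'n \<Rightarrow> real^'m \<Rightarrow> real^'m \<Rightarrow> real \<Rightarrow> real \<Rightarrow> (real^'m) \<times> (real^'m)" where
  "zstar P Q Yt th0 ph0 lam nu = Tinv P Q lam nu (lam *\<^sub>R th0, (\<Sum>i\<in>UNIV. Yt$i *\<^sub>R Q$i) - nu *\<^sub>R ph0)"

lemma zstar_F:
  fixes P Q :: "real^'m::finite^'n::finite"
  assumes lam: "lam > 0" and nu: "nu > 0"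
  shows "Fth P Q th0 lam (fst (zstar P Q Yt th0 ph0 lam nu)) (snd (zstar P Q Yt th0 ph0 lam nu)) = 0"
    "Fph P Q Yt ph0 nu (fst (zstar P Q Yt th0 ph0 lam nu)) (snd (zstar P Q Yt th0 ph0 lam nu)) = 0"
proof -
  let ?z = "zstar P Q Yt th0 ph0 lam nu"
  have T: "Tlin P Q lam nu ?z = (lam *\<^sub>R th0, (\<Sum>i\<in>UNIV. Yt$i *\<^sub>R Q$i) - nu *\<^sub>R ph0)"
    unfolding zstar_def by (rule Tinv_props(2)[OF lam nu])
  then have a: "Fth P Q 0 lam (fst ?z) (snd ?z) = lam *\<^sub>R th0"
    and b: "Fph P Q 0 0 nu (fst ?z) (snd ?z) = (\<Sum>i\<in>UNIV. Yt$i *\<^sub>R Q$i) - nu *\<^sub>R ph0"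
    unfolding Tlin_def by simp_all
  show "Fth P Q th0 lam (fst ?z) (snd ?z) = 0"
    using a Fth_shift[of P Q th0 lam "fst ?z" "snd ?z"] by simp
  show "Fph P Q Yt ph0 nu (fst ?z) (snd ?z) = 0"
    using b Fph_shift[of P Q Yt ph0 nu "fst ?z" "snd ?z"] by simp
qed

lemma the_saddle:
  fixes P Q :: "real^'m::finite^'n::finite"
  assumes lam: "lam > 0" and nu: "nu > 0"
  shows "(THE p. saddle_point (L_rf P Q Yt th0 ph0 lam nu) (fst p) (snd p)) = zstar P Q Yt th0 ph0 lam nu"
proof (rule the_equality)
  show "saddle_point (L_rf P Q Yt th0 ph0 lam nu) (fst (zstar P Q Yt th0 ph0 lam nu)) (snd (zstar P Q Yt th0 ph0 lam nu))"
    using saddle_iff[OF lam nu] zstar_F[OF lam nu] by blast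
  fix p assume "saddle_point (L_rf P Q Yt th0 ph0 lam nu) (fst p) (snd p)"
  then have p: "Fth P Q th0 lam (fst p) (snd p) = 0" "Fph P Q Yt ph0 nu (fst p) (snd p) = 0"
    using saddle_iff[OF lam nu] by blast+
  have "Tlin P Q lam nu p = (lam *\<^sub>R th0, (\<Sum>i\<in>UNIV. Yt$i *\<^sub>R Q$i) - nu *\<^sub>R ph0)"
  proof -
    have a: "Fth P Q 0 lam (fst p) (snd p) = lam *\<^sub>R th0"
      using p(1) Fth_shift[of P Q th0 lam "fst p" "snd p"] by simp
    have b: "Fph P Q 0 0 nu (fst p) (snd p) = (\<Sum>i\<in>UNIV. Yt$i *\<^sub>R Q$i) - nu *\<^sub>R ph0"
      using p(2) Fph_shift[of P Q Yt ph0 nu "fst p" "snd p"] by simp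
    show ?thesis unfolding Tlin_def a b ..
  qed
  then have "p = Tinv P Q lam nu (Tlin P Q lam nu p)" 
    using Tlin_inj[OF lam nu] Tinv_props(2)[OF lam nu] by (metis injD)
  then show "p = zstar P Q Yt th0 ph0 lam nu"
    unfolding zstar_def using \<open>Tlin P Q lam nu p = _\<close> by simp
qed

definition gth :: "real^'m::finite^'n::finite \<Rightarrow> real^'m^'n \<Rightarrow> real^'m \<Rightarrow> real \<Rightarrow> 'n \<Rightarrow> real^'m \<Rightarrow> real^'m \<Rightarrow> real^'m" where
  "gth P Q th0 lam i th ph = (real CARD('n) * (Q$i \<bullet> ph)) *\<^sub>R (P$i) + lam *\<^sub>R (th - th0)"

definition gph :: "real^'m::finite^'n::finite \<Rightarrow> real^'m^'n \<Rightarrow> real^'n \<Rightarrow> real^'m \<Rightarrow> real \<Rightarrow> 'n \<Rightarrow> real^'m \<Rightarrow> real^'m \<Rightarrow> real^'m" where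
  "gph P Q Yt ph0 nu i th ph = (real CARD('n) * ((P$i \<bullet> th) - Yt$i - (Q$i \<bullet> ph))) *\<^sub>R (Q$i) - nu *\<^sub>R (ph - ph0)"

lemma grad_ph:
  fixes P Q :: "real^'m::finite^'n::finite"
  shows "grad (\<lambda>p. L_i P Q Yt th0 ph0 lam nu i th p) ph = gph P Q Yt ph0 nu i th ph"
proof (rule grad_eqI)
  show "((\<lambda>p. L_i P Q Yt th0 ph0 lam nu i th p) has_derivative
     (\<lambda>h. gph P Q Yt ph0 nu i th ph \<bullet> h)) (at ph)"
    unfolding L_i_alt power2_norm_eq_inner gph_def
    apply (rule has_derivative_eq_rhs)
     apply (rule derivative_eq_intros refl)+
    apply (rule ext)
    apply (simp add: algebra_simps inner_commute power2_eq_square)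
    done
qed

lemma sgda_Suc:
  fixes P Q :: "real^'m::finite^'n::finite"
  shows "sgda P Q Yt th0 ph0 lam nu Bf Bg I (Suc l) =
     (proj_ball Bf (fst (sgda P Q Yt th0 ph0 lam nu Bf Bg I l) - (1 / (min lam nu * real (Suc l))) *\<^sub>R
         gth P Q th0 lam (I l) (fst (sgda P Q Yt th0 ph0 lam nu Bf Bg I l)) (snd (sgda P Q Yt th0 ph0 lam nu Bf Bg I l))),
      proj_ball Bg (snd (sgda P Q Yt th0 ph0 lam nu Bf Bg I l) + (1 / (min lam nu * real (Suc l))) *\<^sub>R
         gph P Q Yt ph0 nu (I l) (fst (sgda P Q Yt th0 ph0 lam nu Bf Bg I l)) (snd (sgda P Q Yt th0 ph0 lam nu Bf Bg I l))))"
  by (simp add: Let_def split_beta grad_th grad_ph gth_def del: of_nat_Suc)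

lemma sum_gth: "(\<Sum>i\<in>UNIV. gth P Q th0 lam i th ph) = real CARD('n) *\<^sub>R Fth P Q th0 lam th ph"
  for P Q :: "real^'m::finite^'n::finite"
  by (simp add: gth_def Fth_def sum.distrib scaleR_sum_right scaleR_add_right sum_constant_scaleR del: sum_constant)

lemma sum_gph: "(\<Sum>i\<in>UNIV. gph P Q Yt ph0 nu i th ph) = real CARD('n) *\<^sub>R Fph P Q Yt ph0 nu th ph"
  for P Q :: "real^'m::finite^'n::finite"
  by (simp add: gph_def Fph_def sum_subtractf scaleR_sum_right scaleR_diff_right sum_constant_scaleR del: sum_constant)

lemma proj_le:
  assumes "norm w \<le> B"
  shows "norm (proj_ball B x - w) \<le> norm (x - w)"
proof -
  have B0: "0 \<le> B" using assms norm_ge_zero[of w] by linarith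
  have "dist (closest_point (cball 0 B) x) (closest_point (cball 0 B) w) \<le> dist x w"
    using B0 by (intro closest_point_lipschitz) auto
  moreover have "closest_point (cball 0 B) w = w" using assms by (intro closest_point_self) auto
  ultimately show ?thesis by (simp add: proj_ball_def dist_norm)
qed

lemma proj_in:
  assumes "B \<ge> 0" shows "norm (proj_ball B x) \<le> B"
proof -
  have "closest_point (cball 0 B) x \<in> cball 0 B"
    using assms by (intro closest_point_in_set) auto
  then show ?thesis by (simp add: proj_ball_def)
qed

lemma norm_sq_diff: "(norm (u - e *\<^sub>R g))^2 = (norm u)^2 - 2*e*(g \<bullet> u) + e^2 * (norm g)^2"
  for u g :: "'a::real_inner"
  unfolding power2_norm_eq_inner by (simp add: inner_diff_left inner_diff_right algebra_simps power2_eq_square inner_commute)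

lemma norm_sq_add: "(norm (u + e *\<^sub>R g))^2 = (norm u)^2 + 2*e*(g \<bullet> u) + e^2 * (norm g)^2"
  for u g :: "'a::real_inner"
  unfolding power2_norm_eq_inner by (simp add: inner_add_left inner_add_right algebra_simps power2_eq_square inner_commute)

locale sg =
  fixes P Q :: "real^'m::finite^'n::finite" and Yt :: "real^'n" and th0 ph0 :: "real^'m"
    and lam nu B B2 k :: real
  assumes lam: "lam > 0" and nu: "nu > 0"
    and th0n: "norm th0 \<le> B" and ph0n: "norm ph0 \<le> B"
    and Ytb: "\<And>i. \<bar>Yt$i\<bar> \<le> B2" and Pk: "\<And>i. norm (P$i) \<le> k" and Qk: "\<And>i. norm (Q$i) \<le> k"
    and zsa: "norm (fst (zstar P Q Yt th0 ph0 lam nu)) \<le> B"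
    and zsb: "norm (snd (zstar P Q Yt th0 ph0 lam nu)) \<le> B"
begin

abbreviation "zs \<equiv> zstar P Q Yt th0 ph0 lam nu"
abbreviation "mu \<equiv> min lam nu"
abbreviation "z t I \<equiv> sgda P Q Yt th0 ph0 lam nu B B I t"
definition "D zz = (norm (fst zz - fst zs))^2 + (norm (snd zz - snd zs))^2"
definition "G1 = real CARD('n) * k * k * B + 2 * lam * B"
definition "G2 = real CARD('n) * (2 * k * B + B2) * k + 2 * nu * B"
definition "G = G1 + G2"

lemma B0: "0 \<le> B" using th0n norm_ge_zero[of th0] by linarith
lemma k0: "0 \<le> k" using Pk[of undefined] norm_ge_zero[of "P$undefined"] by linarith
lemma B20: "0 \<le> B2" using Ytb[of undefined] by linarith

lemma z_in: "norm (fst (z t I)) \<le> B \<and> norm (snd (z t I)) \<le> B"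
proof (cases t)
  case 0 then show ?thesis using th0n ph0n by simp
next
  case (Suc l) then show ?thesis by (simp only: sgda_Suc fst_conv snd_conv proj_in[OF B0])
qed

lemma gth_bound:
  assumes "norm th \<le> B" "norm ph \<le> B"
  shows "norm (gth P Q th0 lam i th ph) \<le> G1"
proof -
  have "\<bar>Q$i \<bullet> ph\<bar> \<le> k * B"
    using Cauchy_Schwarz_ineq2[of "Q$i" ph] Qk[of i] assms k0 by (meson mult_mono norm_ge_zero order_trans)
  then have "norm ((real CARD('n) * (Q$i \<bullet> ph)) *\<^sub>R (P$i)) \<le> real CARD('n) * (k * B) * k"
  proof -
    assume h: "\<bar>Q$i \<bullet> ph\<bar> \<le> k * B"
    have "norm ((real CARD('n) * (Q$i \<bullet> ph)) *\<^sub>R (P$i)) = (real CARD('n) * \<bar>Q$i \<bullet> ph\<bar>) * norm (P$i)"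
      by (simp add: abs_mult)
    also have "\<dots> \<le> (real CARD('n) * (k * B)) * k"
      by (rule mult_mono) (use h Pk[of i] k0 B0 in \<open>auto intro: mult_left_mono\<close>)
    finally show ?thesis .
  qed
  moreover have "norm (lam *\<^sub>R (th - th0)) \<le> lam * (B + B)"
    using lam assms th0n norm_triangle_ineq4[of th th0] by (auto intro!: mult_left_mono)
  moreover have "norm (gth P Q th0 lam i th ph) \<le> norm ((real CARD('n) * (Q$i \<bullet> ph)) *\<^sub>R (P$i)) + norm (lam *\<^sub>R (th - th0))"
    unfolding gth_def by (rule norm_triangle_ineq)
  moreover have "G1 = real CARD('n) * (k * B) * k + lam * (B + B)" by (simp add: G1_def algebra_simps)
  ultimately show ?thesis by linarith
qed

lemma gph_bound:
  assumes "norm th \<le> B" "norm ph \<le> B"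
  shows "norm (gph P Q Yt ph0 nu i th ph) \<le> G2"
proof -
  have "\<bar>Q$i \<bullet> ph\<bar> \<le> k * B"
    using Cauchy_Schwarz_ineq2[of "Q$i" ph] Qk[of i] assms k0 by (meson mult_mono norm_ge_zero order_trans)
  moreover have "\<bar>P$i \<bullet> th\<bar> \<le> k * B"
    using Cauchy_Schwarz_ineq2[of "P$i" th] Pk[of i] assms k0 by (meson mult_mono norm_ge_zero order_trans)
  ultimately have "\<bar>(P$i \<bullet> th) - Yt$i - (Q$i \<bullet> ph)\<bar> \<le> 2 * k * B + B2"
    using Ytb[of i] by linarith
  then have "norm ((real CARD('n) * ((P$i \<bullet> th) - Yt$i - (Q$i \<bullet> ph))) *\<^sub>R (Q$i)) \<le> real CARD('n) * (2 * k * B + B2) * k"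
  proof -
    assume h: "\<bar>(P$i \<bullet> th) - Yt$i - (Q$i \<bullet> ph)\<bar> \<le> 2 * k * B + B2"
    have "norm ((real CARD('n) * ((P$i \<bullet> th) - Yt$i - (Q$i \<bullet> ph))) *\<^sub>R (Q$i)) = (real CARD('n) * \<bar>(P$i \<bullet> th) - Yt$i - (Q$i \<bullet> ph)\<bar>) * norm (Q$i)"
      by (simp add: abs_mult)
    also have "\<dots> \<le> (real CARD('n) * (2 * k * B + B2)) * k"
      by (rule mult_mono) (use h Qk[of i] k0 B0 B20 in \<open>auto intro: mult_left_mono\<close>)
    finally show ?thesis .
  qed
  moreover have "norm (nu *\<^sub>R (ph - ph0)) \<le> nu * (B + B)"
    using nu assms ph0n norm_triangle_ineq4[of ph ph0] by (auto intro!: mult_left_mono)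
  moreover have "norm (gph P Q Yt ph0 nu i th ph) \<le> norm ((real CARD('n) * ((P$i \<bullet> th) - Yt$i - (Q$i \<bullet> ph))) *\<^sub>R (Q$i)) + norm (nu *\<^sub>R (ph - ph0))"
    unfolding gph_def by (rule norm_triangle_ineq4)
  moreover have "G2 = real CARD('n) * (2 * k * B + B2) * k + nu * (B + B)" by (simp add: G2_def algebra_simps)
  ultimately show ?thesis by linarith
qed


lemma G_sq: "G1 \<ge> 0" "G2 \<ge> 0" using lam nu B0 k0 B20 by (simp_all add: G1_def G2_def)

lemma mono_zs:
  "Fth P Q th0 lam th ph \<bullet> (th - fst zs) - Fph P Q Yt ph0 nu th ph \<bullet> (ph - snd zs) \<ge> mu * D (th, ph)"
proof -
  have "Fth P Q th0 lam th ph \<bullet> (th - fst zs) - Fph P Q Yt ph0 nu th ph \<bullet> (ph - snd zs)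
     = lam * (norm (th - fst zs))^2 + (\<Sum>i\<in>UNIV. (Q$i \<bullet> (ph - snd zs))^2) + nu * (norm (ph - snd zs))^2"
  proof -
    have z1: "Fth P Q th0 lam (fst zs) (snd zs) = 0" "Fph P Q Yt ph0 nu (fst zs) (snd zs) = 0"
      using zstar_F[OF lam nu] by blast+
    have "(Fth P Q th0 lam th ph - Fth P Q th0 lam (fst zs) (snd zs)) \<bullet> (th - fst zs)
       - (Fph P Q Yt ph0 nu th ph - Fph P Q Yt ph0 nu (fst zs) (snd zs)) \<bullet> (ph - snd zs)
     = lam * (norm (th - fst zs))^2 + (\<Sum>i\<in>UNIV. (Q$i \<bullet> (ph - snd zs))^2) + nu * (norm (ph - snd zs))^2"
      by (rule mono_id)
    then show ?thesis unfolding z1 by simp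
  qed
  moreover have "0 \<le> (\<Sum>i\<in>UNIV. (Q$i \<bullet> (ph - snd zs))^2)" by (simp add: sum_nonneg)
  moreover have "mu * (norm (th - fst zs))^2 \<le> lam * (norm (th - fst zs))^2"
    by (intro mult_right_mono) auto
  moreover have "mu * (norm (ph - snd zs))^2 \<le> nu * (norm (ph - snd zs))^2"
    by (intro mult_right_mono) auto
  ultimately show ?thesis unfolding D_def by (simp add: algebra_simps)
qed

lemma step_one:
  assumes th: "norm th \<le> B" and ph: "norm ph \<le> B" and e: "e \<ge> 0"
  shows "D (proj_ball B (th - e *\<^sub>R gth P Q th0 lam i th ph), proj_ball B (ph + e *\<^sub>R gph P Q Yt ph0 nu i th ph))
    \<le> D (th, ph) - 2*e*(gth P Q th0 lam i th ph \<bullet> (th - fst zs)) + 2*e*(gph P Q Yt ph0 nu i th ph \<bullet> (ph - snd zs)) + e^2 * G^2"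
proof -
  let ?g = "gth P Q th0 lam i th ph" and ?h = "gph P Q Yt ph0 nu i th ph"
  have a: "norm (proj_ball B (th - e *\<^sub>R ?g) - fst zs) \<le> norm ((th - fst zs) - e *\<^sub>R ?g)"
    using proj_le[OF zsa, of "th - e *\<^sub>R ?g"] by (simp add: algebra_simps)
  have b: "norm (proj_ball B (ph + e *\<^sub>R ?h) - snd zs) \<le> norm ((ph - snd zs) + e *\<^sub>R ?h)"
    using proj_le[OF zsb, of "ph + e *\<^sub>R ?h"] by (simp add: algebra_simps)
  have "D (proj_ball B (th - e *\<^sub>R ?g), proj_ball B (ph + e *\<^sub>R ?h))
      \<le> (norm ((th - fst zs) - e *\<^sub>R ?g))^2 + (norm ((ph - snd zs) + e *\<^sub>R ?h))^2"
    unfolding D_def using a b by (auto intro!: add_mono power_mono)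
  also have "\<dots> = D (th, ph) - 2*e*(?g \<bullet> (th - fst zs)) + 2*e*(?h \<bullet> (ph - snd zs)) + e^2 * ((norm ?g)^2 + (norm ?h)^2)"
    unfolding norm_sq_diff norm_sq_add D_def by (simp add: algebra_simps)
  also have "(norm ?g)^2 + (norm ?h)^2 \<le> G^2"
  proof -
    have "(norm ?g)^2 \<le> G1^2" using gth_bound[OF th ph, of i] by (intro power_mono) auto
    moreover have "(norm ?h)^2 \<le> G2^2" using gph_bound[OF th ph, of i] by (intro power_mono) auto
    moreover have "0 \<le> G1 * G2" using G_sq by simp
    ultimately show ?thesis unfolding G_def by (simp add: power2_eq_square algebra_simps)
  qed
  finally show ?thesis using e by (simp add: mult_left_mono)
qed

lemma step_sum:
  assumes th: "norm th \<le> B" and ph: "norm ph \<le> B" and e: "e \<ge> 0"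
  shows "(\<Sum>i\<in>UNIV. D (proj_ball B (th - e *\<^sub>R gth P Q th0 lam i th ph), proj_ball B (ph + e *\<^sub>R gph P Q Yt ph0 nu i th ph)))
    \<le> real CARD('n) * ((1 - 2*e*mu) * D (th, ph) + e^2 * G^2)"
proof -
  have "(\<Sum>i\<in>UNIV. D (proj_ball B (th - e *\<^sub>R gth P Q th0 lam i th ph), proj_ball B (ph + e *\<^sub>R gph P Q Yt ph0 nu i th ph)))
    \<le> (\<Sum>i\<in>UNIV. D (th, ph) - 2*e*(gth P Q th0 lam i th ph \<bullet> (th - fst zs)) + 2*e*(gph P Q Yt ph0 nu i th ph \<bullet> (ph - snd zs)) + e^2 * G^2)"
    by (rule sum_mono) (rule step_one[OF th ph e])
  also have "\<dots> = real CARD('n) * (D (th, ph) + e^2 * G^2) - 2*e*((\<Sum>i\<in>UNIV. gth P Q th0 lam i th ph) \<bullet> (th - fst zs))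
       + 2*e*((\<Sum>i\<in>UNIV. gph P Q Yt ph0 nu i th ph) \<bullet> (ph - snd zs))"
    by (simp add: sum.distrib sum_subtractf inner_sum_left sum_distrib_left algebra_simps)
  also have "\<dots> = real CARD('n) * (D (th, ph) + e^2 * G^2 - 2*e*(Fth P Q th0 lam th ph \<bullet> (th - fst zs) - Fph P Q Yt ph0 nu th ph \<bullet> (ph - snd zs)))"
    unfolding sum_gth sum_gph by (simp add: algebra_simps)
  also have "\<dots> \<le> real CARD('n) * (D (th, ph) + e^2 * G^2 - 2*e*(mu * D (th, ph)))"
    using mono_zs[of th ph] e by (intro mult_left_mono) (auto intro: mult_left_mono)
  finally show ?thesis by (simp add: algebra_simps)
qed

end

lemma sgda_local:
  "(\<And>l. l < t \<Longrightarrow> I l = J l) \<Longrightarrow> sgda P Q Yt th0 ph0 lam nu Bf Bg I t = sgda P Q Yt th0 ph0 lam nu Bf Bg J t"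
  by (induction t) (simp_all add: Let_def)

lemma sum_aff: "(\<Sum>x\<in>A. (n::real) * (c * f x + E)) = n * (c * sum f A + real (card A) * E)"
  by (simp add: sum.distrib distrib_left sum_distrib_left)

lemma sum_Pfx_Suc:
  "(\<Sum>p\<in>PiE {..<Suc t} (\<lambda>_. UNIV::'n::finite set). f p) = (\<Sum>i\<in>UNIV. \<Sum>g\<in>PiE {..<t} (\<lambda>_. UNIV::'n set). f (g(t := i)))"
proof -
  have ins: "{..<Suc t} = insert t {..<t}" by auto
  have "(\<Sum>p\<in>PiE {..<Suc t} (\<lambda>_. UNIV::'n set). f p) = (\<Sum>p\<in>(\<lambda>(y, g). g(t := y)) ` (UNIV \<times> PiE {..<t} (\<lambda>_. UNIV::'n set)). f p)"
    unfolding ins PiE_insert_eq by simp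
  also have "\<dots> = (\<Sum>x\<in>UNIV \<times> PiE {..<t} (\<lambda>_. UNIV::'n set). f ((snd x)(t := fst x)))"
    by (subst sum.reindex) (auto intro!: inj_combinator simp: split_beta comp_def)
  also have "\<dots> = (\<Sum>i\<in>UNIV. \<Sum>g\<in>PiE {..<t} (\<lambda>_. UNIV::'n set). f (g(t := i)))"
    by (subst sum.cartesian_product) (simp add: split_beta)
  finally show ?thesis .
qed

context sg begin

abbreviation "Pfx t \<equiv> PiE {..<t} (\<lambda>_. UNIV::'n set)"
definition "S t = (\<Sum>p\<in>Pfx t. D (z t p))"

lemma D_nonneg: "0 \<le> D zz" unfolding D_def by simp

lemma card_Pfx: "card (Pfx t) = CARD('n) ^ t"
  by (simp add: card_PiE)

lemma S_Suc: "S (Suc t) \<le> real CARD('n) * ((1 - 2 / real (Suc t)) * S t + real (CARD('n) ^ t) * ((1 / (mu * real (Suc t)))^2 * G^2))"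
proof -
  let ?e = "1 / (mu * real (Suc t))"
  have mu0: "mu > 0" using lam nu by simp
  have e0: "?e \<ge> 0" using mu0 by simp
  have mune: "min lam nu \<noteq> 0" using lam nu by (simp add: min_def)
  have emu: "2 * ?e * mu = 2 / real (Suc t)" using mune by simp
  have "S (Suc t) = (\<Sum>i\<in>UNIV. \<Sum>g\<in>Pfx t. D (z (Suc t) (g(t := i))))"
    unfolding S_def by (rule sum_Pfx_Suc)
  also have "\<dots> = (\<Sum>g\<in>Pfx t. \<Sum>i\<in>UNIV. D (z (Suc t) (g(t := i))))"
    by (rule sum.swap)
  also have "\<dots> = (\<Sum>g\<in>Pfx t. \<Sum>i\<in>UNIV. D (proj_ball B (fst (z t g) - ?e *\<^sub>R gth P Q th0 lam i (fst (z t g)) (snd (z t g))),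
                  proj_ball B (snd (z t g) + ?e *\<^sub>R gph P Q Yt ph0 nu i (fst (z t g)) (snd (z t g)))))"
  proof (intro sum.cong refl)
    fix g i
    have loc: "z t (g(t := i)) = z t g" by (rule sgda_local) simp
    show "D (z (Suc t) (g(t := i))) = D (proj_ball B (fst (z t g) - ?e *\<^sub>R gth P Q th0 lam i (fst (z t g)) (snd (z t g))),
                  proj_ball B (snd (z t g) + ?e *\<^sub>R gph P Q Yt ph0 nu i (fst (z t g)) (snd (z t g))))"
      unfolding sgda_Suc loc by simp
  qed
  also have "\<dots> \<le> (\<Sum>g\<in>Pfx t. real CARD('n) * ((1 - 2*?e*mu) * D (z t g) + ?e^2 * G^2))"
  proof (rule sum_mono)
    fix g
    show "(\<Sum>i\<in>UNIV. D (proj_ball B (fst (z t g) - ?e *\<^sub>R gth P Q th0 lam i (fst (z t g)) (snd (z t g))),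
                  proj_ball B (snd (z t g) + ?e *\<^sub>R gph P Q Yt ph0 nu i (fst (z t g)) (snd (z t g)))))
      \<le> real CARD('n) * ((1 - 2*?e*mu) * D (z t g) + ?e^2 * G^2)"
      using step_sum[OF conjunct1[OF z_in[of g t]] conjunct2[OF z_in[of g t]] e0] unfolding prod.collapse .
  qed
  also have "\<dots> = real CARD('n) * ((1 - 2 / real (Suc t)) * S t + real (card (Pfx t)) * (?e^2 * G^2))"
    unfolding emu S_def by (rule sum_aff)
  finally show ?thesis unfolding card_Pfx by simp
qed

definition "K = G^2 / mu^2"

lemma S_bound: "t \<ge> 1 \<Longrightarrow> S t \<le> real CARD('n) ^ t * K / real t"
proof (induction t rule: nat_induct_at_least)
  case base
  have mu0: "mu > 0" using lam nu by simp
  have S0: "S 0 \<ge> 0" unfolding S_def by (intro sum_nonneg D_nonneg)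
  have "S (Suc 0) \<le> real CARD('n) * ((1 - 2 / real (Suc 0)) * S 0 + real (CARD('n) ^ 0) * ((1 / (mu * real (Suc 0)))^2 * G^2))"
    by (rule S_Suc)
  also have "\<dots> = real CARD('n) * (G^2 / mu^2 - S 0)"
    by (simp add: power_divide)
  also have "\<dots> \<le> real CARD('n) * (G^2 / mu^2)"
    using S0 by (intro mult_left_mono) auto
  finally show ?case by (simp add: K_def)
next
  case (Suc t)
  have mu0: "mu > 0" using lam nu by simp
  have K0: "K \<ge> 0" by (simp add: K_def)
  have t1: "real t \<ge> 1" using Suc by simp
  have tpos: "0 < t" using Suc by simp
  have c0: "0 \<le> 1 - 2 / real (Suc t)" using t1 by (simp add: field_simps)
  have "S (Suc t) \<le> real CARD('n) * ((1 - 2 / real (Suc t)) * S t + real (CARD('n) ^ t) * ((1 / (mu * real (Suc t)))^2 * G^2))"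
    by (rule S_Suc)
  also have "\<dots> \<le> real CARD('n) * ((1 - 2 / real (Suc t)) * (real CARD('n) ^ t * K / real t) + real (CARD('n) ^ t) * ((1 / (mu * real (Suc t)))^2 * G^2))"
    using Suc.IH c0 by (intro mult_left_mono add_mono mult_left_mono) auto
  also have "\<dots> = real CARD('n) ^ Suc t * K * ((1 - 2 / real (Suc t)) / real t + 1 / (real (Suc t))^2)"
  proof -
    have mune: "min lam nu \<noteq> 0" using lam nu by (simp add: min_def)
    have e: "(1 / (mu * real (Suc t)))^2 * G^2 = K / (real (Suc t))^2"
      using mune by (simp add: K_def power_divide power_mult_distrib)
    show ?thesis unfolding e by (simp add: algebra_simps)
  qed
  also have "\<dots> \<le> real CARD('n) ^ Suc t * K * (1 / real (Suc t))"
  proof (intro mult_left_mono)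
    have "(1 - 2 / real (Suc t)) / real t + 1 / (real (Suc t))^2 = (real t - 1) / (real t * (real t + 1)) + 1 / (real t + 1)^2"
      using t1 tpos by (simp add: field_simps)
    also have "\<dots> \<le> 1 / (real t + 1)"
    proof -
      have a: "(real t - 1) / (real t * (real t + 1)) = 1 / (real t + 1) - 1 / (real t * (real t + 1))"
        using tpos by (simp add: diff_divide_distrib)
      have b: "1 / (real t + 1)^2 \<le> 1 / (real t * (real t + 1))"
      proof (rule divide_left_mono)
        show "real t * (real t + 1) \<le> (real t + 1)^2" by (simp add: power2_eq_square)
        have "0 < real t * (real t + 1)" using t1 by simp
        moreover have "0 < (real t + 1)^2" using t1 by simp
        ultimately show "0 < (real t + 1)^2 * (real t * (real t + 1))" using mult_pos_pos by blast
      qed simp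
      show ?thesis unfolding a using b by linarith
    qed
    finally show "(1 - 2 / real (Suc t)) / real t + 1 / (real (Suc t))^2 \<le> 1 / real (Suc t)" by (simp add: add.commute)
  qed (use K0 in simp)
  finally show ?case by simp
qed

lemma count_bound:
  assumes "e > 0"
  shows "real (card {p\<in>Pfx L. e < norm (fst (z L p) - fst zs)}) * e^2 \<le> S L"
proof -
  let ?A = "{p\<in>Pfx L. e < norm (fst (z L p) - fst zs)}"
  have fin: "finite (Pfx L)" by (simp add: finite_PiE)
  have "real (card ?A) * e^2 = (\<Sum>p\<in>?A. e^2)" by simp
  also have "\<dots> \<le> (\<Sum>p\<in>?A. D (z L p))"
  proof (rule sum_mono)
    fix p assume "p \<in> ?A"
    then have "e^2 \<le> (norm (fst (z L p) - fst zs))^2" using assms by (intro power_mono) auto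
    then show "e^2 \<le> D (z L p)" unfolding D_def by (smt (verit) zero_le_power2)
  qed
  also have "\<dots> \<le> S L" unfolding S_def
    by (rule sum_mono2[OF fin]) (auto intro: D_nonneg)
  finally show ?thesis .
qed

end

abbreviation "unifM \<equiv> (\<lambda>_::nat. measure_pmf (pmf_of_set (UNIV::'n::finite set)))"

lemma pps_idx: "product_prob_space (unifM :: nat \<Rightarrow> 'n::finite measure)"
  by (rule product_prob_spaceI) (rule prob_space_measure_pmf)

lemma idx_count:
  fixes X :: "(nat \<Rightarrow> 'n::finite) set"
  assumes X: "X \<subseteq> PiE {..<L} (\<lambda>_. UNIV)"
  shows "emeasure (index_seq :: (nat \<Rightarrow> 'n) measure) (prod_emb UNIV unifM {..<L} X) = real (card X) / real CARD('n) ^ L"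
proof -
  have finX: "finite X" using X by (rule finite_subset) (simp add: finite_PiE)
  have single: "{p} = PiE {..<L} (\<lambda>j. {p j})" if "p \<in> PiE {..<L} (\<lambda>_. UNIV::'n set)" for p
  proof (intro set_eqI iffI)
    fix x assume "x \<in> {p}" then show "x \<in> PiE {..<L} (\<lambda>j. {p j})" using that by auto
  next
    fix x assume x: "x \<in> PiE {..<L} (\<lambda>j. {p j})"
    have "x j = p j" for j
    proof (cases "j < L")
      case True then show ?thesis using x by auto
    next
      case False then show ?thesis using x that by (auto simp: PiE_def extensional_def)
    qed
    then show "x \<in> {p}" by auto
  qed
  have singS: "{p} \<in> sets (PiM {..<L} unifM)" if "p \<in> X" for p
    using X that by (subst single) auto
  have XS: "X \<in> sets (PiM {..<L} unifM)"
  proof -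
    have "X = (\<Union>p\<in>X. {p})" by auto
    also have "\<dots> \<in> sets (PiM {..<L} unifM)" using finX singS by (intro sets.finite_UN) auto
    finally show ?thesis .
  qed
  have "emeasure index_seq (prod_emb UNIV unifM {..<L} X) = emeasure (PiM {..<L} unifM) X"
    unfolding index_seq_def by (rule product_prob_space.emeasure_PiM_emb'[OF pps_idx]) (auto simp: XS)
  also have "\<dots> = (\<Sum>p\<in>X. emeasure (PiM {..<L} unifM) {p})"
    by (rule emeasure_eq_sum_singleton[OF finX singS])
  also have "\<dots> = (\<Sum>p\<in>X. ennreal (1 / real CARD('n) ^ L))"
  proof (rule sum.cong[OF refl])
    fix p assume "p \<in> X"
    then have "emeasure (PiM {..<L} unifM) {p} = (\<Prod>j\<in>{..<L}. emeasure (unifM j) {p j})"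
      using X by (subst single) (auto intro!: product_sigma_finite.emeasure_PiM[OF product_prob_space.axioms(1)[OF pps_idx]])
    also have "\<dots> = (\<Prod>j\<in>{..<L}. ennreal (1 / real CARD('n)))"
      by (simp add: emeasure_pmf_single)
    also have "\<dots> = ennreal (1 / real CARD('n) ^ L)"
      by (simp, subst ennreal_power) (auto simp: power_one_over)
    finally show "emeasure (PiM {..<L} unifM) {p} = ennreal (1 / real CARD('n) ^ L)" .
  qed
  also have "\<dots> = real (card X) / real CARD('n) ^ L"
    by (simp add: ennreal_of_nat_eq_real_of_nat ennreal_mult'[symmetric])
  finally show ?thesis .
qed

lemma sets_gauss[measurable_cong]: "sets (gauss_vec mu s2) = sets borel"
  by (simp add: gauss_vec_def)

lemma m_th0[measurable]: "(\<lambda>\<omega>. fst (fst \<omega>)) \<in> borel_measurable (sgda_space lam nu Y)"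
  unfolding sgda_space_def by measurable
lemma m_ph0[measurable]: "(\<lambda>\<omega>. snd (fst \<omega>)) \<in> borel_measurable (sgda_space lam nu Y)"
  unfolding sgda_space_def by measurable
lemma m_Yt[measurable]: "(\<lambda>\<omega>. fst (snd \<omega>)) \<in> borel_measurable (sgda_space lam nu Y)"
  unfolding sgda_space_def by measurable

lemma m_I: "(\<lambda>\<omega>. snd (snd \<omega>) l) \<in> measurable (sgda_space lam nu (Y::real^'n::finite) :: (((real^'m::finite) \<times> (real^'m)) \<times> ((real^'n) \<times> (nat \<Rightarrow> 'n))) measure) (count_space UNIV)"
proof -
  have "(\<lambda>\<omega>. snd (snd \<omega>) l) \<in> measurable (sgda_space lam nu Y) (measure_pmf (pmf_of_set UNIV))"
    unfolding sgda_space_def index_seq_def by measurable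
  moreover have "sets (measure_pmf (pmf_of_set (UNIV::'n set))) = sets (count_space UNIV)" by simp
  ultimately show ?thesis using measurable_cong_sets[OF refl, of "measure_pmf (pmf_of_set (UNIV::'n set))" "count_space UNIV" "sgda_space lam nu Y"] by simp
qed

lemma cont_proj: "B \<ge> 0 \<Longrightarrow> continuous_on S (proj_ball B)"
  unfolding proj_ball_def by (intro continuous_on_closest_point) auto

lemma Tinv_cont:
  fixes P Q :: "real^'m::finite^'n::finite"
  assumes "lam > 0" "nu > 0"
  shows "continuous_on S (Tinv P Q lam nu)"
  using Tinv_props(1)[OF assms, of P Q] by (intro linear_continuous_on) (simp add: linear_conv_bounded_linear)

lemma m_zstar:
  fixes P Q :: "real^'m::finite^'n::finite"
  assumes lam: "lam > 0" and nu: "nu > 0"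
  shows "(\<lambda>\<omega>. zstar P Q (fst (snd \<omega>)) (fst (fst \<omega>)) (snd (fst \<omega>)) lam nu) \<in> borel_measurable (sgda_space lam nu Y)"
proof -
  let ?f = "\<lambda>x::(real^'m) \<times> (real^'m) \<times> (real^'n). Tinv P Q lam nu (lam *\<^sub>R fst x, (\<Sum>i\<in>UNIV. (snd (snd x))$i *\<^sub>R Q$i) - nu *\<^sub>R fst (snd x))"
  have c: "continuous_on UNIV ?f"
    by (rule continuous_on_compose2[OF Tinv_cont[OF lam nu]]) (auto intro!: continuous_intros)
  have "(\<lambda>\<omega>. ?f (fst (fst \<omega>), snd (fst \<omega>), fst (snd \<omega>))) \<in> borel_measurable (sgda_space lam nu Y)"
    by (rule borel_measurable_continuous_on[OF c]) measurable
  then show ?thesis unfolding zstar_def by simp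
qed


definition stepf :: "real^'m::finite^'n::finite \<Rightarrow> real^'m^'n \<Rightarrow> real \<Rightarrow> real \<Rightarrow> real \<Rightarrow> real \<Rightarrow> 'n
   \<Rightarrow> ((real^'m) \<times> (real^'m)) \<times> (real^'m) \<times> (real^'m) \<times> (real^'n) \<Rightarrow> (real^'m) \<times> (real^'m)" where
  "stepf P Q lam nu B e i x = (proj_ball B (fst (fst x) - e *\<^sub>R gth P Q (fst (snd x)) lam i (fst (fst x)) (snd (fst x))),
      proj_ball B (snd (fst x) + e *\<^sub>R gph P Q (snd (snd (snd x))) (fst (snd (snd x))) nu i (fst (fst x)) (snd (fst x))))"

lemma stepf_cont:
  assumes "B \<ge> 0"
  shows "continuous_on UNIV (stepf P Q lam nu B e i)"
  unfolding stepf_def gth_def gph_def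
  by (intro continuous_on_Pair continuous_on_compose2[OF cont_proj[OF assms], of UNIV] continuous_intros) auto

lemma m_sgda:
  fixes P Q :: "real^'m::finite^'n::finite"
  assumes B: "B \<ge> 0"
  shows "(\<lambda>\<omega>. sgda P Q (fst (snd \<omega>)) (fst (fst \<omega>)) (snd (fst \<omega>)) lam nu B B (snd (snd \<omega>)) L)
     \<in> borel_measurable (sgda_space lam nu Y)"
proof (induction L)
  case 0
  have "(\<lambda>\<omega>. (fst (fst \<omega>), snd (fst \<omega>))) \<in> borel_measurable (sgda_space lam nu Y)"
    by (intro borel_measurable_Pair m_th0 m_ph0)
  then show ?case by simp
next
  case (Suc L)
  let ?z = "\<lambda>\<omega>. sgda P Q (fst (snd \<omega>)) (fst (fst \<omega>)) (snd (fst \<omega>)) lam nu B B (snd (snd \<omega>)) L"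
  let ?e = "1 / (min lam nu * real (Suc L))"
  have f: "(\<lambda>\<omega>. stepf P Q lam nu B ?e i (?z \<omega>, fst (fst \<omega>), snd (fst \<omega>), fst (snd \<omega>))) \<in> borel_measurable (sgda_space lam nu Y)" for i
    by (rule borel_measurable_continuous_on[OF stepf_cont[OF B]]) (use Suc.IH in measurable)
  have "(\<lambda>\<omega>. stepf P Q lam nu B ?e (snd (snd \<omega>) L) (?z \<omega>, fst (fst \<omega>), snd (fst \<omega>), fst (snd \<omega>))) \<in> borel_measurable (sgda_space lam nu Y)"
    by (rule measurable_compose_countable[OF f m_I])
  then show ?case by (simp only: sgda_Suc stepf_def fst_conv snd_conv)
qed

lemma rf_nonneg: "rf_kernel phi x x \<ge> 0"
  unfolding rf_kernel_def by simp

lemma kernel_le: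
  assumes "(SUP z. ereal (rf_kernel phz z z)) + (SUP x. ereal (rf_kernel phx x x)) \<le> ereal B3"
  shows "rf_kernel phz z z \<le> B3" "rf_kernel phx x x \<le> B3"
proof -
  have a: "ereal (rf_kernel phz z z) \<le> (SUP z. ereal (rf_kernel phz z z))" by (rule SUP_upper) simp
  have b: "ereal (rf_kernel phx x x) \<le> (SUP x. ereal (rf_kernel phx x x))" by (rule SUP_upper) simp
  have a0: "0 \<le> (SUP z. ereal (rf_kernel phz z z))" using a rf_nonneg[of phz z] by (meson ereal_less_eq(5) order_trans)
  have b0: "0 \<le> (SUP x. ereal (rf_kernel phx x x))" using b rf_nonneg[of phx x] by (meson ereal_less_eq(5) order_trans)
  have "ereal (rf_kernel phz z z) + 0 \<le> ereal B3"
    using add_mono[OF a b0] assms by (rule order_trans)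
  then show "rf_kernel phz z z \<le> B3" by simp
  have "0 + ereal (rf_kernel phx x x) \<le> ereal B3"
    using add_mono[OF a0 b] assms by (rule order_trans)
  then show "rf_kernel phx x x \<le> B3" by simp
qed

lemma feat_row_norm:
  fixes phi :: "'a \<Rightarrow> real^'m::finite" and xs :: "'n::finite \<Rightarrow> 'a"
  shows "(norm (feat_mat phi xs $ i))^2 = rf_kernel phi (xs i) (xs i)"
proof -
  have "(norm (feat_mat phi xs $ i))^2 = (\<Sum>j\<in>UNIV. (phi (xs i) $ j / sqrt (real CARD('m)))^2)"
    unfolding power2_norm_eq_inner by (simp add: feat_mat_def inner_vec_def power2_eq_square)
  also have "\<dots> = (\<Sum>j\<in>UNIV. (phi (xs i) $ j)^2) / real CARD('m)"
    by (simp add: power_divide sum_divide_distrib)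
  also have "\<dots> = rf_kernel phi (xs i) (xs i)"
    by (simp add: rf_kernel_def inner_vec_def power2_eq_square)
  finally show ?thesis .
qed

lemma feat_row_bound:
  assumes "\<And>x. rf_kernel phi x x \<le> B3"
  shows "norm (feat_mat phi xs $ i) \<le> sqrt B3"
  using feat_row_norm[of phi xs i] assms[of "xs i"] by (metis norm_ge_zero real_le_rsqrt)

lemma zstar_bound:
  fixes P Q :: "real^'m::finite^'n::finite"
  assumes lam: "lam > 0" and nu: "nu > 0" and th0: "norm th0 \<le> B1" and ph0: "norm ph0 \<le> B1"
    and Yt: "\<And>i. \<bar>Yt$i\<bar> \<le> B2" and Qk: "\<And>i. norm (Q$i) \<le> k" and k0: "k \<ge> 0"
  defines "R0 \<equiv> lam * B1 + real CARD('n) * B2 * k + nu * B1"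
  shows "norm (fst (zstar P Q Yt th0 ph0 lam nu)) \<le> 2 * R0 / min lam nu
       \<and> norm (snd (zstar P Q Yt th0 ph0 lam nu)) \<le> 2 * R0 / min lam nu"
proof -
  let ?zs = "zstar P Q Yt th0 ph0 lam nu"
  let ?a = "fst ?zs" and ?b = "snd ?zs"
  let ?mu = "min lam nu"
  have mu0: "?mu > 0" using lam nu by simp
  have B10: "B1 \<ge> 0" using th0 norm_ge_zero[of th0] by linarith
  have B20: "B2 \<ge> 0" using Yt[of undefined] by linarith
  have z1: "Fth P Q th0 lam ?a ?b = 0" "Fph P Q Yt ph0 nu ?a ?b = 0"
    using zstar_F[OF lam nu] by blast+
  have "(Fth P Q th0 lam ?a ?b - Fth P Q th0 lam 0 0) \<bullet> (?a - 0)
       - (Fph P Q Yt ph0 nu ?a ?b - Fph P Q Yt ph0 nu 0 0) \<bullet> (?b - 0)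
     = lam * (norm (?a - 0))^2 + (\<Sum>i\<in>UNIV. (Q$i \<bullet> (?b - 0))^2) + nu * (norm (?b - 0))^2"
    by (rule mono_id)
  then have eq: "Fph P Q Yt ph0 nu 0 0 \<bullet> ?b - Fth P Q th0 lam 0 0 \<bullet> ?a
     = lam * (norm ?a)^2 + (\<Sum>i\<in>UNIV. (Q$i \<bullet> ?b)^2) + nu * (norm ?b)^2"
    unfolding z1 by simp
  have F1: "norm (Fth P Q th0 lam 0 0) \<le> R0"
  proof -
    have "Fth P Q th0 lam 0 0 = - (lam *\<^sub>R th0)" by (simp add: Fth_def)
    then have "norm (Fth P Q th0 lam 0 0) = lam * norm th0" using lam by simp
    also have "\<dots> \<le> lam * B1" using th0 lam by simp
    also have "\<dots> \<le> R0" unfolding R0_def using B20 k0 nu B10 by simp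
    finally show ?thesis .
  qed
  have F2: "norm (Fph P Q Yt ph0 nu 0 0) \<le> R0"
  proof -
    have "Fph P Q Yt ph0 nu 0 0 = (\<Sum>i\<in>UNIV. (- Yt$i) *\<^sub>R Q$i) + nu *\<^sub>R ph0" by (simp add: Fph_def)
    then have "norm (Fph P Q Yt ph0 nu 0 0) \<le> norm (\<Sum>i\<in>UNIV. (- Yt$i) *\<^sub>R Q$i) + norm (nu *\<^sub>R ph0)"
      by (metis norm_triangle_ineq)
    also have "norm (\<Sum>i\<in>UNIV. (- Yt$i) *\<^sub>R Q$i) \<le> (\<Sum>i\<in>(UNIV::'n set). B2 * k)"
    proof -
      have "norm (\<Sum>i\<in>UNIV. (- Yt$i) *\<^sub>R Q$i) \<le> (\<Sum>i\<in>UNIV. norm ((- Yt$i) *\<^sub>R Q$i))" by (rule norm_sum)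
      also have "\<dots> \<le> (\<Sum>i\<in>(UNIV::'n set). B2 * k)"
      proof (rule Groups_Big.sum_mono)
        fix i
        have "norm ((- Yt$i) *\<^sub>R Q$i) = \<bar>Yt$i\<bar> * norm (Q$i)" by simp
        also have "\<dots> \<le> B2 * k" using Yt[of i] Qk[of i] B20 by (intro mult_mono) auto
        finally show "norm ((- Yt$i) *\<^sub>R Q$i) \<le> B2 * k" .
      qed
      finally show ?thesis .
    qed
    also have "norm (nu *\<^sub>R ph0) \<le> nu * B1" using nu ph0 by simp
    finally have "norm (Fph P Q Yt ph0 nu 0 0) \<le> real CARD('n) * (B2 * k) + nu * B1" by simp
    moreover have "0 \<le> lam * B1" using lam B10 by simp
    ultimately show ?thesis unfolding R0_def by (simp add: algebra_simps)
  qed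
  let ?x = "norm ?a" and ?y = "norm ?b"
  have "?mu * (?x^2 + ?y^2) \<le> lam * ?x^2 + nu * ?y^2"
    by (simp add: distrib_left add_mono mult_right_mono)
  also have "\<dots> \<le> Fph P Q Yt ph0 nu 0 0 \<bullet> ?b - Fth P Q th0 lam 0 0 \<bullet> ?a"
    unfolding eq by (simp add: sum_nonneg)
  also have "\<dots> \<le> R0 * ?y + R0 * ?x"
  proof -
    have "Fph P Q Yt ph0 nu 0 0 \<bullet> ?b \<le> norm (Fph P Q Yt ph0 nu 0 0) * ?y" by (rule norm_cauchy_schwarz)
    also have "\<dots> \<le> R0 * ?y" using F2 by (simp add: mult_right_mono)
    finally have a: "Fph P Q Yt ph0 nu 0 0 \<bullet> ?b \<le> R0 * ?y" .
    have "- (Fth P Q th0 lam 0 0 \<bullet> ?a) \<le> norm (Fth P Q th0 lam 0 0) * ?x"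
      using Cauchy_Schwarz_ineq2[of "Fth P Q th0 lam 0 0" ?a] by linarith
    also have "\<dots> \<le> R0 * ?x" using F1 by (simp add: mult_right_mono)
    finally have b: "- (Fth P Q th0 lam 0 0 \<bullet> ?a) \<le> R0 * ?x" .
    show ?thesis using a b by linarith
  qed
  finally have key: "?mu * (?x^2 + ?y^2) \<le> R0 * (?x + ?y)" by (simp add: algebra_simps)
  have R00: "R0 \<ge> 0" unfolding R0_def using lam nu B10 B20 k0 by simp
  have sum_le: "?x + ?y \<le> 2 * R0 / ?mu"
  proof (cases "?x + ?y = 0")
    case True then show ?thesis using R00 mu0 by simp
  next
    case False
    then have pos: "?x + ?y > 0" by (simp add: add_nonneg_eq_0_iff order_less_le)
    have "?mu * (?x + ?y)^2 \<le> 2 * (?mu * (?x^2 + ?y^2))"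
    proof -
      have e: "(?x + ?y)^2 = 2 * (?x^2 + ?y^2) - (?x - ?y)^2" by (simp add: power2_eq_square algebra_simps)
      have "(?x + ?y)^2 \<le> 2 * (?x^2 + ?y^2)" unfolding e using zero_le_power2[of "?x - ?y"] by linarith
      then show ?thesis using mu0 by simp
    qed
    also have "\<dots> \<le> 2 * (R0 * (?x + ?y))" using key by simp
    finally have "?mu * (?x + ?y) * (?x + ?y) \<le> (2 * R0) * (?x + ?y)" by (simp add: power2_eq_square algebra_simps)
    then have "?mu * (?x + ?y) \<le> 2 * R0" using pos by simp
    then show ?thesis using mu0 by (simp add: field_simps)
  qed
  then show ?thesis using norm_ge_zero[of ?a] norm_ge_zero[of ?b] by linarith
qed

lemma UNIV_emb: "prod_emb UNIV (unifM :: nat \<Rightarrow> 'n::finite measure) {..<L} X = {I. restrict I {..<L} \<in> X}"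
  by (auto simp: prod_emb_def space_PiM)

lemma pointwise:
  fixes P Q :: "real^'m::finite^'n::finite"
  assumes lam: "lam > 0" and nu: "nu > 0" and e: "\<epsilon> > 0" and d: "\<delta> > 0"
    and th0: "norm th0 \<le> B1" and ph0: "norm ph0 \<le> B1" and Yt: "norm Yt \<le> B2"
    and Pk: "\<And>i. norm (P$i) \<le> k" and Qk: "\<And>i. norm (Q$i) \<le> k" and k0: "k \<ge> 0"
    and BB: "2 * (lam * B1 + real CARD('n) * B2 * k + nu * B1) / min lam nu \<le> BB" and B1B: "B1 \<le> BB" and BBp: "BB > 0"
    and Kc: "Kc = ((real CARD('n) * k * k * BB + 2 * lam * BB) + (real CARD('n) * (2 * k * BB + B2) * k + 2 * nu * BB))^2 / (min lam nu)^2"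
    and L: "\<delta> < 1 \<Longrightarrow> \<epsilon> < 2 * BB \<Longrightarrow> Kc / (\<delta> * \<epsilon>^2) \<le> real L"
  shows "emeasure (index_seq :: (nat \<Rightarrow> 'n) measure)
     {I. \<epsilon> < norm (fst (sgda P Q Yt th0 ph0 lam nu BB BB I L) - fst (zstar P Q Yt th0 ph0 lam nu))} \<le> \<delta>"
proof -
  have Ytb: "\<And>i. \<bar>Yt$i\<bar> \<le> B2" using Yt component_le_norm_cart order_trans by blast
  have zb: "norm (fst (zstar P Q Yt th0 ph0 lam nu)) \<le> BB \<and> norm (snd (zstar P Q Yt th0 ph0 lam nu)) \<le> BB"
    using zstar_bound[where P=P, OF lam nu th0 ph0 Ytb Qk k0] BB by (meson order_trans)
  interpret sg P Q Yt th0 ph0 lam nu BB B2 k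
  proof
    show "norm th0 \<le> BB" "norm ph0 \<le> BB" using th0 ph0 B1B by linarith+
  qed (use lam nu Ytb Pk Qk zb in auto)
  let ?bad = "{I. \<epsilon> < norm (fst (sgda P Q Yt th0 ph0 lam nu BB BB I L) - fst zs)}"
  have ps: "prob_space (index_seq :: (nat \<Rightarrow> 'n) measure)"
    unfolding index_seq_def by (rule prob_space_PiM) (rule prob_space_measure_pmf)
  show ?thesis
  proof (cases "\<delta> < 1 \<and> \<epsilon> < 2 * BB")
    case False
    show ?thesis
    proof (cases "\<delta> < 1")
      case True
      with False have eB: "2 * BB \<le> \<epsilon>" by simp
      have "?bad = {}"
      proof -
        have "norm (fst (z L I) - fst zs) \<le> 2 * BB" for I
          using z_in[of I L] zsa norm_triangle_ineq4[of "fst (z L I)" "fst zs"] by linarith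
        then show ?thesis using eB by (auto simp: not_less intro: order_trans)
      qed
      then show ?thesis using d by simp
    next
      case False
      have "emeasure index_seq ?bad \<le> 1" by (rule prob_space.emeasure_le_1[OF ps])
      also have "\<dots> \<le> ennreal \<delta>" using False by simp
      finally show ?thesis .
    qed
  next
    case True
    then have dl: "\<delta> < 1" and eB: "\<epsilon> < 2 * BB" by auto
    have KK: "K = Kc" unfolding K_def G_def G1_def G2_def Kc ..
    have Kp: "K > 0"
    proof -
      have "G1 > 0" unfolding G1_def using lam BBp k0 by (simp add: add_nonneg_pos)
      then have "G > 0" unfolding G_def using G_sq by simp
      then show ?thesis unfolding K_def using lam nu by simp
    qed
    have Lp: "real L > 0"
    proof -
      have "0 < K / (\<delta> * \<epsilon>^2)" using Kp d e by simp
      also have "\<dots> \<le> real L" using L[OF dl eB] KK by simp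
      finally show ?thesis .
    qed
    define X where "X = {p \<in> Pfx L. \<epsilon> < norm (fst (z L p) - fst zs)}"
    have XP: "X \<subseteq> Pfx L" unfolding X_def by auto
    have "?bad = prod_emb UNIV unifM {..<L} X"
    proof -
      have "z L (restrict I {..<L}) = z L I" for I by (rule sgda_local) simp
      then show ?thesis unfolding UNIV_emb X_def by auto
    qed
    then have eqm: "emeasure index_seq ?bad = ennreal (real (card X) / real CARD('n) ^ L)"
      using idx_count[OF XP] by simp
    have le: "real (card X) / real CARD('n) ^ L \<le> \<delta>"
    proof -
      have N0: "real CARD('n) ^ L > 0" by simp
      have "real (card X) * \<epsilon>^2 \<le> S L" unfolding X_def by (rule count_bound[OF e])
      also have "\<dots> \<le> real CARD('n) ^ L * K / real L" using Lp by (intro S_bound) simp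
      finally have c1: "real (card X) * \<epsilon>^2 \<le> real CARD('n) ^ L * K / real L" .
      have c2: "K \<le> \<delta> * \<epsilon>^2 * real L"
        using L[OF dl eB] KK d e by (simp add: divide_le_eq mult.commute)
      have "real (card X) * \<epsilon>^2 * real L \<le> real CARD('n) ^ L * K"
        using c1 Lp by (simp add: le_divide_eq)
      also have "\<dots> \<le> real CARD('n) ^ L * (\<delta> * \<epsilon>^2 * real L)"
        using c2 by (intro mult_left_mono) auto
      finally have "real (card X) * (\<epsilon>^2 * real L) \<le> (\<delta> * real CARD('n) ^ L) * (\<epsilon>^2 * real L)"
        by (simp add: algebra_simps)
      then have "real (card X) \<le> \<delta> * real CARD('n) ^ L"
        using e Lp by (simp add: mult_le_cancel_right)
      then show ?thesis using N0 by (simp add: divide_le_eq)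
    qed
    show ?thesis unfolding eqm using le by (rule ennreal_leI)
  qed
qed

theorem mainTheorem17:
  fixes xs :: "'n::finite \<Rightarrow> 'x" and zs :: "'n \<Rightarrow> 'z" and Y :: "real^'n"
    and phx :: "'x \<Rightarrow> real^'m::finite" and phz :: "'z \<Rightarrow> real^'m"
    and lam nu :: real
  assumes "lam > 0" and "nu > 0"
  shows "\<forall>B1 B2 B3. B1 > 0 \<and> B2 > 0 \<and> B3 > 0 \<longrightarrow>
    (\<exists>C. \<forall>\<epsilon> \<delta>. \<epsilon> > 0 \<and> \<delta> > 0 \<longrightarrow>
      (\<exists>Bf Bg. Bf > 0 \<and> Bg > 0 \<and>
        (\<exists>L0::nat. real L0 \<le> C / (\<delta> * \<epsilon>^2) \<and>
          (\<forall>L\<ge>L0.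
            (\<exists>A \<in> sets (sgda_space lam nu Y).
              {\<omega> \<in> space (sgda_space lam nu Y).
                 (let th0 = fst (fst \<omega>); ph0 = snd (fst \<omega>); Yt = fst (snd \<omega>); I = snd (snd \<omega>);
                      Pf = feat_mat phx xs; Pg = feat_mat phz zs;
                      ths = fst (THE p. saddle_point (L_rf Pf Pg Yt th0 ph0 lam nu) (fst p) (snd p))
                  in norm (fst (sgda Pf Pg Yt th0 ph0 lam nu Bf Bg I L) - ths) > \<epsilon>
                     \<and> norm th0 + norm ph0 \<le> B1 \<and> norm Yt \<le> B2
                     \<and> (SUP z. ereal (rf_kernel phz z z)) + (SUP x. ereal (rf_kernel phx x x)) \<le> ereal B3)}
              \<subseteq> A \<and> measure (sgda_space lam nu Y) A \<le> \<delta>)))))"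
proof (intro allI impI)
  fix B1 B2 B3 :: real
  assume Bs: "B1 > 0 \<and> B2 > 0 \<and> B3 > 0"
  have lam: "lam > 0" and nu: "nu > 0" by fact+
  define P where "P = feat_mat phx xs"
  define Q where "Q = feat_mat phz zs"
  define k where "k = sqrt B3"
  define R0 where "R0 = lam * B1 + real CARD('n) * B2 * k + nu * B1"
  define BB where "BB = max B1 (2 * R0 / min lam nu)"
  define Kc where "Kc = ((real CARD('n) * k * k * BB + 2 * lam * BB) + (real CARD('n) * (2 * k * BB + B2) * k + 2 * nu * BB))^2 / (min lam nu)^2"
  define C where "C = Kc + 4 * BB^2"
  have k0: "k \<ge> 0" unfolding k_def using Bs by simp
  have BBp: "BB > 0" unfolding BB_def using Bs by (auto simp: less_max_iff_disj)
  have B1B: "B1 \<le> BB" unfolding BB_def by simp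
  have BBR: "2 * (lam * B1 + real CARD('n) * B2 * k + nu * B1) / min lam nu \<le> BB" unfolding BB_def R0_def by simp
  have Kc0: "Kc \<ge> 0" unfolding Kc_def by simp
  show "\<exists>C. \<forall>\<epsilon> \<delta>. \<epsilon> > 0 \<and> \<delta> > 0 \<longrightarrow>
      (\<exists>Bf Bg. Bf > 0 \<and> Bg > 0 \<and>
        (\<exists>L0::nat. real L0 \<le> C / (\<delta> * \<epsilon>^2) \<and>
          (\<forall>L\<ge>L0.
            (\<exists>A \<in> sets (sgda_space lam nu Y).
              {\<omega> \<in> space (sgda_space lam nu Y).
                 (let th0 = fst (fst \<omega>); ph0 = snd (fst \<omega>); Yt = fst (snd \<omega>); I = snd (snd \<omega>);
                      Pf = feat_mat phx xs; Pg = feat_mat phz zs;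
                      ths = fst (THE p. saddle_point (L_rf Pf Pg Yt th0 ph0 lam nu) (fst p) (snd p))
                  in norm (fst (sgda Pf Pg Yt th0 ph0 lam nu Bf Bg I L) - ths) > \<epsilon>
                     \<and> norm th0 + norm ph0 \<le> B1 \<and> norm Yt \<le> B2
                     \<and> (SUP z. ereal (rf_kernel phz z z)) + (SUP x. ereal (rf_kernel phx x x)) \<le> ereal B3)}
              \<subseteq> A \<and> measure (sgda_space lam nu Y) A \<le> \<delta>))))"
  proof (rule exI[of _ C], intro allI impI)
    fix \<epsilon> \<delta> :: real
    assume ed: "\<epsilon> > 0 \<and> \<delta> > 0"
    then have e: "\<epsilon> > 0" and d: "\<delta> > 0" by auto
    define L0 where "L0 = (if \<delta> < 1 \<and> \<epsilon> < 2 * BB then nat \<lceil>Kc / (\<delta> * \<epsilon>^2)\<rceil> else 0)"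
    have de0: "\<delta> * \<epsilon>^2 > 0" using d e by simp
    have L0C: "real L0 \<le> C / (\<delta> * \<epsilon>^2)"
    proof (cases "\<delta> < 1 \<and> \<epsilon> < 2 * BB")
      case True
      have q0: "0 \<le> Kc / (\<delta> * \<epsilon>^2)" using Kc0 de0 by simp
      have "real L0 = of_int \<lceil>Kc / (\<delta> * \<epsilon>^2)\<rceil>"
        unfolding L0_def using True q0 by simp
      also have "\<dots> \<le> Kc / (\<delta> * \<epsilon>^2) + 1" by (rule of_int_ceiling_le_add_one)
      also have "1 \<le> 4 * BB^2 / (\<delta> * \<epsilon>^2)"
      proof -
        have "\<epsilon>^2 < (2 * BB)^2" using True e by (intro power_strict_mono) auto
        moreover have "\<delta> * \<epsilon>^2 \<le> \<epsilon>^2" using True e d by simp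
        ultimately have "\<delta> * \<epsilon>^2 \<le> 4 * BB^2" by (simp add: power_mult_distrib)
        then show ?thesis using de0 by simp
      qed
      finally show ?thesis unfolding C_def by (simp add: add_divide_distrib)
    next
      case False
      then have "L0 = 0" unfolding L0_def by auto
      then show ?thesis unfolding C_def using Kc0 de0 by simp
    qed
    have L0K: "\<delta> < 1 \<Longrightarrow> \<epsilon> < 2 * BB \<Longrightarrow> Kc / (\<delta> * \<epsilon>^2) \<le> real L" if "L \<ge> L0" for L
    proof -
      assume "\<delta> < 1" "\<epsilon> < 2 * BB"
      then have "L0 = nat \<lceil>Kc / (\<delta> * \<epsilon>^2)\<rceil>" unfolding L0_def by simp
      then show ?thesis using that by simp
    qed
    show "\<exists>Bf Bg. Bf > 0 \<and> Bg > 0 \<and>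
        (\<exists>L0::nat. real L0 \<le> C / (\<delta> * \<epsilon>^2) \<and>
          (\<forall>L\<ge>L0.
            (\<exists>A \<in> sets (sgda_space lam nu Y).
              {\<omega> \<in> space (sgda_space lam nu Y).
                 (let th0 = fst (fst \<omega>); ph0 = snd (fst \<omega>); Yt = fst (snd \<omega>); I = snd (snd \<omega>);
                      Pf = feat_mat phx xs; Pg = feat_mat phz zs;
                      ths = fst (THE p. saddle_point (L_rf Pf Pg Yt th0 ph0 lam nu) (fst p) (snd p))
                  in norm (fst (sgda Pf Pg Yt th0 ph0 lam nu Bf Bg I L) - ths) > \<epsilon>
                     \<and> norm th0 + norm ph0 \<le> B1 \<and> norm Yt \<le> B2
                     \<and> (SUP z. ereal (rf_kernel phz z z)) + (SUP x. ereal (rf_kernel phx x x)) \<le> ereal B3)}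
              \<subseteq> A \<and> measure (sgda_space lam nu Y) A \<le> \<delta>)))"
    proof (intro exI[of _ BB] exI[of _ L0] conjI BBp L0C allI impI)
      fix L :: nat assume LL0: "L0 \<le> L"
      let ?M = "sgda_space lam nu Y :: (((real^'m) \<times> (real^'m)) \<times> ((real^'n) \<times> (nat \<Rightarrow> 'n))) measure"
      let ?Kern = "(SUP z. ereal (rf_kernel phz z z)) + (SUP x. ereal (rf_kernel phx x x)) \<le> ereal B3"
      define A where "A = {\<omega> \<in> space ?M.
          \<epsilon> < norm (fst (sgda P Q (fst (snd \<omega>)) (fst (fst \<omega>)) (snd (fst \<omega>)) lam nu BB BB (snd (snd \<omega>)) L)
                 - fst (zstar P Q (fst (snd \<omega>)) (fst (fst \<omega>)) (snd (fst \<omega>)) lam nu))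
          \<and> norm (fst (fst \<omega>)) + norm (snd (fst \<omega>)) \<le> B1 \<and> norm (fst (snd \<omega>)) \<le> B2 \<and> ?Kern}"
      have eqA: "{\<omega> \<in> space ?M.
                 (let th0 = fst (fst \<omega>); ph0 = snd (fst \<omega>); Yt = fst (snd \<omega>); I = snd (snd \<omega>);
                      Pf = feat_mat phx xs; Pg = feat_mat phz zs;
                      ths = fst (THE p. saddle_point (L_rf Pf Pg Yt th0 ph0 lam nu) (fst p) (snd p))
                  in norm (fst (sgda Pf Pg Yt th0 ph0 lam nu BB BB I L) - ths) > \<epsilon>
                     \<and> norm th0 + norm ph0 \<le> B1 \<and> norm Yt \<le> B2
                     \<and> ?Kern)} = A"
        unfolding A_def Let_def P_def Q_def the_saddle[OF lam nu] ..
      have BB0: "BB \<ge> 0" using BBp by simp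
      have m1: "(\<lambda>\<omega>. norm (fst (sgda P Q (fst (snd \<omega>)) (fst (fst \<omega>)) (snd (fst \<omega>)) lam nu BB BB (snd (snd \<omega>)) L)
                 - fst (zstar P Q (fst (snd \<omega>)) (fst (fst \<omega>)) (snd (fst \<omega>)) lam nu))) \<in> borel_measurable ?M"
      proof -
        have c: "continuous_on UNIV (\<lambda>p::((real^'m) \<times> (real^'m)) \<times> ((real^'m) \<times> (real^'m)). norm (fst (fst p) - fst (snd p)))"
          by (intro continuous_intros)
        have "(\<lambda>\<omega>. (sgda P Q (fst (snd \<omega>)) (fst (fst \<omega>)) (snd (fst \<omega>)) lam nu BB BB (snd (snd \<omega>)) L,
                 zstar P Q (fst (snd \<omega>)) (fst (fst \<omega>)) (snd (fst \<omega>)) lam nu)) \<in> borel_measurable ?M"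
          by (intro borel_measurable_Pair m_sgda[OF BB0] m_zstar[OF lam nu])
        from borel_measurable_continuous_on[OF c this] show ?thesis by simp
      qed
      have m2: "(\<lambda>\<omega>. norm (fst (fst \<omega>)) + norm (snd (fst \<omega>))) \<in> borel_measurable ?M" by measurable
      have m3: "(\<lambda>\<omega>. norm (fst (snd \<omega>))) \<in> borel_measurable ?M" by measurable
      have Asets: "A \<in> sets ?M" unfolding A_def using m1 m2 m3 by measurable
      show "\<exists>A' \<in> sets ?M. {\<omega> \<in> space ?M.
                 (let th0 = fst (fst \<omega>); ph0 = snd (fst \<omega>); Yt = fst (snd \<omega>); I = snd (snd \<omega>);
                      Pf = feat_mat phx xs; Pg = feat_mat phz zs;
                      ths = fst (THE p. saddle_point (L_rf Pf Pg Yt th0 ph0 lam nu) (fst p) (snd p))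
                  in norm (fst (sgda Pf Pg Yt th0 ph0 lam nu BB BB I L) - ths) > \<epsilon>
                     \<and> norm th0 + norm ph0 \<le> B1 \<and> norm Yt \<le> B2
                     \<and> ?Kern)} \<subseteq> A' \<and> measure ?M A' \<le> \<delta>"
      proof (intro bexI[OF _ Asets] conjI)
        let ?M12 = "gauss_vec (0::real^'m) 1 \<Otimes>\<^sub>M gauss_vec (0::real^'m) (lam / nu)"
        let ?M3 = "gauss_vec Y lam"
        let ?M34 = "?M3 \<Otimes>\<^sub>M (index_seq :: (nat \<Rightarrow> 'n) measure)"
        have ps1: "prob_space (gauss_vec (0::real^'m) 1)" by (rule gauss_prob) simp
        have ps2: "prob_space (gauss_vec (0::real^'m) (lam / nu))" by (rule gauss_prob) (use lam nu in simp)
        have ps3: "prob_space ?M3" by (rule gauss_prob) (use lam in simp)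
        have ps4: "prob_space (index_seq :: (nat \<Rightarrow> 'n) measure)"
          unfolding index_seq_def by (rule prob_space_PiM) (rule prob_space_measure_pmf)
        have ps12: "prob_space ?M12" by (rule prob_space_pair[OF ps1 ps2])
        have ps34: "prob_space ?M34" by (rule prob_space_pair[OF ps3 ps4])
        have psM: "prob_space ?M" unfolding sgda_space_def by (rule prob_space_pair[OF ps12 ps34])
        have Msets: "A \<in> sets (?M12 \<Otimes>\<^sub>M ?M34)" using Asets unfolding sgda_space_def .
        have Pk: "norm (P$i) \<le> k" if "?Kern" for i
          unfolding P_def k_def by (rule feat_row_bound) (rule kernel_le(2)[OF that])
        have Qk: "norm (Q$i) \<le> k" if "?Kern" for i
          unfolding Q_def k_def by (rule feat_row_bound) (rule kernel_le(1)[OF that])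
        have pw: "emeasure index_seq (Pair y -` Pair x -` A) \<le> ennreal \<delta>" for x y
        proof -
          have sp: "(x, (y, I)) \<in> space ?M" for I
            by (simp add: sgda_space_def space_pair_measure gauss_vec_def index_seq_def space_PiM)
          show ?thesis
          proof (cases "norm (fst x) + norm (snd x) \<le> B1 \<and> norm y \<le> B2 \<and> ?Kern")
            case True
            then have th0: "norm (fst x) \<le> B1" and ph0: "norm (snd x) \<le> B1" and Yt: "norm y \<le> B2"
              and K: ?Kern using norm_ge_zero[of "fst x"] norm_ge_zero[of "snd x"] by linarith+
            have "Pair y -` Pair x -` A = {I. \<epsilon> < norm (fst (sgda P Q y (fst x) (snd x) lam nu BB BB I L) - fst (zstar P Q y (fst x) (snd x) lam nu))}"
              using True sp unfolding A_def by auto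
            also have "emeasure index_seq \<dots> \<le> \<delta>"
              by (rule pointwise[OF lam nu e d th0 ph0 Yt Pk[OF K] Qk[OF K] k0 BBR B1B BBp Kc_def L0K[OF LL0]])
            finally show ?thesis .
          next
            case False
            then have "Pair y -` Pair x -` A = {}" unfolding A_def by auto
            then show ?thesis by simp
          qed
        qed
        have "emeasure ?M A = (\<integral>\<^sup>+x. emeasure ?M34 (Pair x -` A) \<partial>?M12)"
          unfolding sgda_space_def
          by (rule sigma_finite_measure.emeasure_pair_measure_alt[OF prob_space_imp_sigma_finite[OF ps34] Msets])
        also have "\<dots> \<le> (\<integral>\<^sup>+x. ennreal \<delta> \<partial>?M12)"
        proof (rule nn_integral_mono)
          fix x
          have sx: "Pair x -` A \<in> sets ?M34" by (rule sets_Pair1[OF Msets])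
          have "emeasure ?M34 (Pair x -` A) = (\<integral>\<^sup>+y. emeasure index_seq (Pair y -` (Pair x -` A)) \<partial>?M3)"
            by (rule sigma_finite_measure.emeasure_pair_measure_alt[OF prob_space_imp_sigma_finite[OF ps4] sx])
          also have "\<dots> \<le> (\<integral>\<^sup>+y. ennreal \<delta> \<partial>?M3)"
            by (rule nn_integral_mono) (rule pw)
          also have "\<dots> = ennreal \<delta>" using ps3 by (simp add: prob_space.emeasure_space_1)
          finally show "emeasure ?M34 (Pair x -` A) \<le> ennreal \<delta>" .
        qed
        also have "\<dots> = ennreal \<delta>" using ps12 by (simp add: prob_space.emeasure_space_1)
        finally have "emeasure ?M A \<le> ennreal \<delta>" .
        then show "measure ?M A \<le> \<delta>"
          using d by (simp add: finite_measure.emeasure_eq_measure[OF prob_space.finite_measure[OF psM]])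
      qed (simp only: eqA)
    qed
  qed
qed

end
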